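(* Consider the grouped linear quantile model with a fixed number $p$ of groups (so $r=dp$ is fixed) and the adaptive fused group LASSO quantile estimator $\widehat{\boldsymbol\beta}_n$ defined in the context. Assume: (A1) the errors $\varepsilon_1,\dots,\varepsilon_n$ are i.i.d. with distribution function $F$ and density $f$, where $f$ is continuous and strictly positive in a neighbourhood of $0$ and has a bounded first derivative in a neighbourhood of $0$, and $F(0)=\tau$; (A2) there exist constants $0<m_0\le M_0<\infty$ such that $m_0\le \lambda_{\min}\big(n^{-1}\sum_{i=1}^n \mathbb{X}_i\mathbb{X}_i^t\big)\le \lambda_{\max}\big(n^{-1}\sum_{i=1}^n \mathbb{X}_i\mathbb{X}_i^t\big)\le M_0$, and moreover $n^{-1}\sum_{i=1}^n \mathbb{X}_i\mathbb{X}_i^t\to \mathbf{U}$ as $n\to\infty$ for some positive definite $r\times r$ matrix $\mathbf{U}$; (A3) $n^{-1/2}\max_{1\le i\le n}\|\mathbb{X}_i\|\to 0$. Suppose the tuning parameters satisfy, for $m=1,2$, as $n\to\infty$: $\mu_n^{(m)}\to\infty$, $n^{-1/2}\mu_n^{(m)}\to 0$ and $n^{(\gamma-1)/2}\mu_n^{(m)}\to\infty$. Then $\sqrt{n}\,\|\widehat{\boldsymbol\beta}_n-\boldsymbol\beta^0\|=O_{\mathbb P}(1)$.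
   Context: Model: $Y_i=\sum_{j=1}^p \mathbf{X}_{ij}^t\boldsymbol\beta_j+\varepsilon_i=\mathbb{X}_i^t\boldsymbol\beta+\varepsilon_i$, $i=1,\dots,n$, where each group $j$ has parameter $\boldsymbol\beta_j\in\mathbb{R}^d$ and design vector $\mathbf{X}_{ij}\in\mathbb{R}^d$, $\boldsymbol\beta=(\boldsymbol\beta_1,\dots,\boldsymbol\beta_p)\in\mathbb{R}^r$, $r=dp$, and $\mathbb{X}_i\in\mathbb{R}^r$ is the concatenation of the $\mathbf{X}_{ij}$ (deterministic design). The true parameter is $\boldsymbol\beta^0=(\boldsymbol\beta^0_1,\dots,\boldsymbol\beta^0_p)$. Fix $\tau\in(0,1)$ and the check function $\rho_\tau(u)=u(\tau-1\!\!1_{u<0})$. Let $G_n(\boldsymbol\beta)=\sum_{i=1}^n\rho_\tau(Y_i-\mathbb{X}_i^t\boldsymbol\beta)$ and let $\widetilde{\boldsymbol\beta}_n=(\widetilde{\boldsymbol\beta}_{n;1},\dots,\widetilde{\boldsymbol\beta}_{n;p})=\arg\min_{\boldsymbol\beta\in\mathbb{R}^r}G_n(\boldsymbol\beta)$ be the quantile estimator. For a fixed $\gamma>0$ define weights $\widehat\omega^{(1)}_{n;j}=\|\widetilde{\boldsymbol\beta}_{n;j}\|^{-\gamma}$ ($j=1,\dots,p$) and $\widehat\omega^{(2)}_{n;j}=\|\widetilde{\boldsymbol\beta}_{n;j}-\widetilde{\boldsymbol\beta}_{n;j-1}\|^{-\gamma}$ ($j=2,\dots,p$). The adaptive fused group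 LASSO quantile estimator $\widehat{\boldsymbol\beta}_n=(\widehat{\boldsymbol\beta}_{n;1},\dots,\widehat{\boldsymbol\beta}_{n;p})$ is a minimizer of $Q_n(\boldsymbol\beta)=G_n(\boldsymbol\beta)+\mu_n^{(1)}\sum_{j=1}^p\widehat\omega^{(1)}_{n;j}\|\boldsymbol\beta_j\|+\mu_n^{(2)}\sum_{j=2}^p\widehat\omega^{(2)}_{n;j}\|\boldsymbol\beta_j-\boldsymbol\beta_{j-1}\|$, with positive tuning parameters $\mu_n^{(1)},\mu_n^{(2)}$. $\|\cdot\|$ is the Euclidean norm. *)

theory Defs
  imports "HOL-Probability.Probability"
begin

text \<open>Parameters are represented as functions \<open>b :: nat \<Rightarrow> nat \<Rightarrow> real\<close>:
  \<open>b j k\<close> is the k-th component (k < d) of the j-th group (j < p).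
  Groups are indexed 0..p-1 and observations 0..n-1.\<close>

definition check_fun :: "real \<Rightarrow> real \<Rightarrow> real" where
  "check_fun \<tau> u = u * (\<tau> - (if u < 0 then 1 else 0))"

definition gnorm :: "nat \<Rightarrow> (nat \<Rightarrow> real) \<Rightarrow> real" where
  "gnorm d v = sqrt (\<Sum>k<d. (v k)^2)"

definition pnorm :: "nat \<Rightarrow> nat \<Rightarrow> (nat \<Rightarrow> nat \<Rightarrow> real) \<Rightarrow> real" where
  "pnorm p d b = sqrt (\<Sum>j<p. \<Sum>k<d. (b j k)^2)"

definition lin :: "nat \<Rightarrow> nat \<Rightarrow> (nat \<Rightarrow> nat \<Rightarrow> real) \<Rightarrow> (nat \<Rightarrow> nat \<Rightarrow> real) \<Rightarrow> real" where
  "lin p d x b = (\<Sum>j<p. \<Sum>k<d. x j k * b j k)"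

definition Gn :: "real \<Rightarrow> nat \<Rightarrow> nat \<Rightarrow> (nat \<Rightarrow> nat \<Rightarrow> nat \<Rightarrow> real) \<Rightarrow> (nat \<Rightarrow> real)
    \<Rightarrow> nat \<Rightarrow> (nat \<Rightarrow> nat \<Rightarrow> real) \<Rightarrow> real" where
  "Gn \<tau> p d X Y n b = (\<Sum>i<n. check_fun \<tau> (Y i - lin p d (X i) b))"

definition Qn :: "real \<Rightarrow> real \<Rightarrow> nat \<Rightarrow> nat \<Rightarrow> (nat \<Rightarrow> nat \<Rightarrow> nat \<Rightarrow> real) \<Rightarrow> (nat \<Rightarrow> real)
    \<Rightarrow> nat \<Rightarrow> real \<Rightarrow> real \<Rightarrow> (nat \<Rightarrow> nat \<Rightarrow> real) \<Rightarrow> (nat \<Rightarrow> nat \<Rightarrow> real) \<Rightarrow> real" where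
  "Qn \<tau> \<gamma> p d X Y n m1 m2 bt b =
     Gn \<tau> p d X Y n b
     + m1 * (\<Sum>j<p. gnorm d (bt j) powr (-\<gamma>) * gnorm d (b j))
     + m2 * (\<Sum>j\<in>{1..<p}. gnorm d (\<lambda>k. bt j k - bt (j-1) k) powr (-\<gamma>)
                               * gnorm d (\<lambda>k. b j k - b (j-1) k))"

definition idx :: "nat \<Rightarrow> nat \<Rightarrow> (nat \<times> nat) set" where
  "idx p d = {..<p} \<times> {..<d}"

definition gram :: "nat \<Rightarrow> (nat \<Rightarrow> nat \<Rightarrow> nat \<Rightarrow> real) \<Rightarrow> (nat \<times> nat) \<Rightarrow> (nat \<times> nat) \<Rightarrow> real" where
  "gram n X a c = (1 / real n) * (\<Sum>i<n. X i (fst a) (snd a) * X i (fst c) (snd c))"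

definition eigvals :: "'i set \<Rightarrow> ('i \<Rightarrow> 'i \<Rightarrow> real) \<Rightarrow> real set" where
  "eigvals I A = {l. \<exists>v. (\<exists>a\<in>I. v a \<noteq> 0) \<and> (\<forall>a\<in>I. (\<Sum>c\<in>I. A a c * v c) = l * v a)}"

definition lambda_min :: "'i set \<Rightarrow> ('i \<Rightarrow> 'i \<Rightarrow> real) \<Rightarrow> real" where
  "lambda_min I A = Min (eigvals I A)"

definition lambda_max :: "'i set \<Rightarrow> ('i \<Rightarrow> 'i \<Rightarrow> real) \<Rightarrow> real" where
  "lambda_max I A = Max (eigvals I A)"

definition pos_def :: "'i set \<Rightarrow> ('i \<Rightarrow> 'i \<Rightarrow> real) \<Rightarrow> bool" where
  "pos_def I A \<longleftrightarrow> (\<forall>a\<in>I. \<forall>c\<in>I. A a c = A c a) \<and>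
     (\<forall>v. (\<exists>a\<in>I. v a \<noteq> 0) \<longrightarrow> (\<Sum>a\<in>I. \<Sum>c\<in>I. v a * A a c * v c) > 0)"

text \<open>Boundedness in probability, Z_n = O_P(1), using outer probability
  (no measurability of Z_n is presupposed).\<close>
definition bounded_in_prob :: "'a measure \<Rightarrow> (nat \<Rightarrow> 'a \<Rightarrow> real) \<Rightarrow> bool" where
  "bounded_in_prob M Z \<longleftrightarrow>
     (\<forall>e>0. \<exists>C. \<exists>N. \<forall>n\<ge>N. \<exists>A\<in>sets M.
        {\<omega>\<in>space M. \<bar>Z n \<omega>\<bar> > C} \<subseteq> A \<and> measure M A < e)"

end

theory Submission
  imports Defs
begin


lemma posdef_uniform:
  fixes U :: "'i \<Rightarrow> 'i \<Rightarrow> real"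
  assumes fin: "finite I" and ne: "I \<noteq> {}" and pd: "pos_def I U"
  shows "\<exists>c>0. \<forall>v. (\<Sum>a\<in>I. \<Sum>b\<in>I. v a * U a b * v b) \<ge> c * (\<Sum>a\<in>I. (v a)^2)"
proof -
  define q where "q v = (\<Sum>a\<in>I. \<Sum>b\<in>I. v a * U a b * v b)" for v :: "'i \<Rightarrow> real"
  define S where "S a = (if a \<in> I then {-1..1} else {0::real})" for a
  define K where "K = Pi\<^sub>E UNIV S \<inter> {v. (\<Sum>a\<in>I. (v a)^2) = 1}"
  have c1: "compact (Pi\<^sub>E UNIV S)"
    unfolding compactin_euclidean_iff[symmetric] euclidean_product_topology[symmetric]
    by (subst compactin_PiE) (auto simp: S_def)
  have cont_n: "continuous_on UNIV (\<lambda>v::'i\<Rightarrow>real. \<Sum>a\<in>I. (v a)^2)"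
    by (intro continuous_intros continuous_on_product_coordinates)
  have "closed {v::'i\<Rightarrow>real. (\<Sum>a\<in>I. (v a)^2) = 1}"
    by (intro closed_Collect_eq cont_n continuous_on_const)
  then have cK: "compact K" unfolding K_def using c1 by blast
  obtain a0 where a0: "a0 \<in> I" using ne by auto
  have "(\<Sum>a\<in>I. ((\<lambda>a. if a = a0 then 1 else 0::real) a)^2) = (\<Sum>a\<in>I. if a = a0 then 1 else 0)"
    by (rule sum.cong) auto
  then have "(\<lambda>a. if a = a0 then 1 else 0::real) \<in> K"
    unfolding K_def S_def using a0 fin by auto
  then have Kne: "K \<noteq> {}" by auto
  have cq: "continuous_on K q" unfolding q_def
    by (intro continuous_intros continuous_on_product_coordinates[THEN continuous_on_subset]) auto
  obtain v0 where v0: "v0 \<in> K" "\<And>y. y \<in> K \<Longrightarrow> q v0 \<le> q y"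
    using continuous_attains_inf[OF cK Kne cq] by auto
  have "\<exists>a\<in>I. v0 a \<noteq> 0"
  proof (rule ccontr)
    assume "\<not> ?thesis"
    then have "(\<Sum>a\<in>I. (v0 a)^2) = 0" by simp
    with v0(1) show False unfolding K_def by simp
  qed
  then have qpos: "q v0 > 0" using pd unfolding pos_def_def q_def by blast
  show ?thesis
  proof (intro exI[of _ "q v0"] conjI allI qpos)
    fix v :: "'i \<Rightarrow> real"
    define s where "s = (\<Sum>a\<in>I. (v a)^2)"
    have s0: "s \<ge> 0" unfolding s_def by (intro sum_nonneg) auto
    show "q v0 * (\<Sum>a\<in>I. (v a)^2) \<le> (\<Sum>a\<in>I. \<Sum>b\<in>I. v a * U a b * v b)"
    proof (cases "s = 0")
      case True
      then have "\<forall>a\<in>I. v a = 0" unfolding s_def using fin by (simp add: sum_nonneg_eq_0_iff)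
      then show ?thesis using True by (simp add: s_def)
    next
      case False
      then have sp: "s > 0" using s0 by auto
      define w where "w a = (if a \<in> I then v a / sqrt s else 0)" for a
      have sw: "(\<Sum>a\<in>I. (w a)^2) = 1"
        using sp by (simp add: w_def power_divide sum_divide_distrib[symmetric] s_def[symmetric])
      have "w \<in> K"
      proof -
        have "-1 \<le> w a \<and> w a \<le> 1" if "a \<in> I" for a
        proof -
          have "(w a)^2 \<le> (\<Sum>a\<in>I. (w a)^2)"
            by (rule member_le_sum) (use that fin in auto)
          then have "(w a)^2 \<le> 1^2" using sw by simp
          then have "\<bar>w a\<bar> \<le> 1" using abs_le_square_iff[of "w a" 1] by simp
          then show ?thesis by (simp add: abs_le_iff)
        qed
        then have "\<forall>a. w a \<in> S a" unfolding S_def by (auto simp: w_def)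
        then show ?thesis unfolding K_def using sw by auto
      qed
      then have "q v0 \<le> q w" by (rule v0(2))
      also have "q w = q v / s"
        unfolding q_def w_def using sp
        by (simp add: sum_divide_distrib power2_eq_square cong: sum.cong)
      finally have "q v0 * s \<le> q v" using sp by (simp add: field_simps)
      then show ?thesis by (simp add: q_def s_def)
    qed
  qed
qed


definition uc :: "(nat \<Rightarrow> nat \<Rightarrow> real) \<Rightarrow> nat \<times> nat \<Rightarrow> real" where
  "uc b a = b (fst a) (snd a)"

lemma finite_idx[simp]: "finite (idx p d)" by (simp add: idx_def)

lemma pnorm_L2: "pnorm p d b = L2_set (uc b) (idx p d)"
  by (simp add: pnorm_def L2_set_def uc_def idx_def sum.cartesian_product split_def)

lemma gnorm_L2: "gnorm d v = L2_set v {..<d}"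
  by (simp add: gnorm_def L2_set_def)

lemma lin_sum: "lin p d x b = (\<Sum>a\<in>idx p d. uc x a * uc b a)"
  by (simp add: lin_def uc_def idx_def sum.cartesian_product split_def)

lemma pnorm_nonneg[simp]: "pnorm p d b \<ge> 0" by (simp add: pnorm_L2)
lemma gnorm_nonneg[simp]: "gnorm d v \<ge> 0" by (simp add: gnorm_L2)

lemma lin_CS: "\<bar>lin p d x b\<bar> \<le> pnorm p d x * pnorm p d b"
proof -
  have "\<bar>lin p d x b\<bar> \<le> (\<Sum>a\<in>idx p d. \<bar>uc x a\<bar> * \<bar>uc b a\<bar>)"
    unfolding lin_sum by (rule order.trans[OF sum_abs]) (simp add: abs_mult)
  also have "\<dots> \<le> pnorm p d x * pnorm p d b" unfolding pnorm_L2 by (rule L2_set_mult_ineq)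
  finally show ?thesis .
qed

lemma lin_add: "lin p d x (\<lambda>j k. b j k + c j k) = lin p d x b + lin p d x c"
  by (simp add: lin_def distrib_left sum.distrib)
lemma lin_diff: "lin p d x (\<lambda>j k. b j k - c j k) = lin p d x b - lin p d x c"
  by (simp add: lin_def right_diff_distrib sum_subtractf)
lemma lin_scale: "lin p d x (\<lambda>j k. s * b j k) = s * lin p d x b"
  by (simp add: lin_def sum_distrib_left mult_ac)
lemma lin_div: "lin p d x (\<lambda>j k. b j k / s) = lin p d x b / s"
  by (simp add: lin_def sum_divide_distrib)

lemma pnorm_scale: "pnorm p d (\<lambda>j k. s * b j k) = \<bar>s\<bar> * pnorm p d b"
  unfolding pnorm_L2 uc_def by (subst L2_set_right_distrib) (auto simp: L2_set_def power_mult_distrib)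

lemma pnorm_triangle: "pnorm p d (\<lambda>j k. b j k + c j k) \<le> pnorm p d b + pnorm p d c"
  unfolding pnorm_L2 uc_def by (rule L2_set_triangle_ineq)

lemma pnorm_minus: "pnorm p d (\<lambda>j k. b j k - c j k) = pnorm p d (\<lambda>j k. c j k - b j k)"
  by (simp add: pnorm_def power2_commute)

lemma pnorm_triangle_diff: "pnorm p d (\<lambda>j k. b j k - c j k) \<le> pnorm p d b + pnorm p d c"
  using pnorm_triangle[of p d b "\<lambda>j k. - c j k"] pnorm_scale[of p d "-1" c] by simp

lemma pnorm_ge_pnorm_diff: "pnorm p d b \<le> pnorm p d c + pnorm p d (\<lambda>j k. b j k - c j k)"
  using pnorm_triangle[of p d c "\<lambda>j k. b j k - c j k"] by simp

lemma gnorm_le_pnorm: assumes "j < p" shows "gnorm d (b j) \<le> pnorm p d b"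
proof -
  have "(\<Sum>k<d. (b j k)^2) \<le> (\<Sum>j<p. \<Sum>k<d. (b j k)^2)"
    by (rule member_le_sum[where f="\<lambda>j. \<Sum>k<d. (b j k)^2"]) (auto intro: sum_nonneg simp: assms)
  then show ?thesis by (simp add: gnorm_def pnorm_def)
qed

lemma comp_le_pnorm: assumes "j < p" "k < d" shows "\<bar>b j k\<bar> \<le> pnorm p d b"
proof -
  have "\<bar>b j k\<bar> = sqrt ((b j k)^2)" by simp
  also have "\<dots> \<le> gnorm d (b j)" unfolding gnorm_def
    by (intro real_sqrt_le_mono member_le_sum[where f="\<lambda>k. (b j k)^2"]) (auto simp: assms)
  also have "\<dots> \<le> pnorm p d b" by (rule gnorm_le_pnorm[OF assms(1)])
  finally show ?thesis .
qed

lemma gnorm_triangle: "gnorm d (\<lambda>k. x k + y k) \<le> gnorm d x + gnorm d y"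
  unfolding gnorm_L2 by (rule L2_set_triangle_ineq)

lemma gnorm_scale: "gnorm d (\<lambda>k. s * x k) = \<bar>s\<bar> * gnorm d x"
  unfolding gnorm_L2 by (subst L2_set_right_distrib) (auto simp: L2_set_def power_mult_distrib)

lemma gnorm_convex:
  assumes "0 \<le> l" "l \<le> 1"
  shows "gnorm d (\<lambda>k. (1-l) * x k + l * y k) \<le> (1-l) * gnorm d x + l * gnorm d y"
  using gnorm_triangle[of d "\<lambda>k. (1-l) * x k" "\<lambda>k. l * y k"] assms
  by (simp add: gnorm_scale)

lemma gnorm_eq0: "gnorm d x = 0 \<longleftrightarrow> (\<forall>k<d. x k = 0)"
  unfolding gnorm_L2 by (subst L2_set_eq_0_iff) auto

lemma check_convex:
  assumes "0 \<le> l" "l \<le> 1" "0 < \<tau>" "\<tau> < 1"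
  shows "check_fun \<tau> ((1-l) * x + l * y) \<le> (1-l) * check_fun \<tau> x + l * check_fun \<tau> y"
proof -
  have e: "check_fun \<tau> u = max (\<tau> * u) ((\<tau> - 1) * u)" for u
    using assms by (auto simp: check_fun_def max_def mult_le_cancel_right algebra_simps)
  have "\<tau> * ((1-l) * x + l * y) = (1-l) * (\<tau> * x) + l * (\<tau> * y)" by (simp add: algebra_simps)
  also have "\<dots> \<le> (1-l) * check_fun \<tau> x + l * check_fun \<tau> y"
    unfolding e using assms by (intro add_mono mult_left_mono) auto
  finally have 1: "\<tau> * ((1-l) * x + l * y) \<le> (1-l) * check_fun \<tau> x + l * check_fun \<tau> y" .
  have "(\<tau>-1) * ((1-l) * x + l * y) = (1-l) * ((\<tau>-1) * x) + l * ((\<tau>-1) * y)" by (simp add: algebra_simps)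
  also have "\<dots> \<le> (1-l) * check_fun \<tau> x + l * check_fun \<tau> y"
    unfolding e using assms by (intro add_mono mult_left_mono) auto
  finally have 2: "(\<tau>-1) * ((1-l) * x + l * y) \<le> (1-l) * check_fun \<tau> x + l * check_fun \<tau> y" .
  show ?thesis using 1 2 unfolding e by simp
qed

lemma check_lip:
  assumes "0 < \<tau>" "\<tau> < 1"
  shows "\<bar>check_fun \<tau> x - check_fun \<tau> y\<bar> \<le> \<bar>x - y\<bar>"
proof -
  have e: "check_fun \<tau> u = max (\<tau> * u) ((\<tau> - 1) * u)" for u
    using assms by (auto simp: check_fun_def max_def mult_le_cancel_right algebra_simps)
  have h1: "\<bar>\<tau> * x - \<tau> * y\<bar> \<le> \<bar>x - y\<bar>"
  proof -
    have "\<bar>\<tau> * x - \<tau> * y\<bar> = \<bar>\<tau>\<bar> * \<bar>x - y\<bar>"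
      by (simp add: right_diff_distrib[symmetric] abs_mult)
    also have "\<dots> \<le> 1 * \<bar>x - y\<bar>" using assms by (intro mult_right_mono) auto
    finally show ?thesis by simp
  qed
  have h2: "\<bar>(\<tau>-1) * x - (\<tau>-1) * y\<bar> \<le> \<bar>x - y\<bar>"
  proof -
    have "\<bar>(\<tau>-1) * x - (\<tau>-1) * y\<bar> = \<bar>\<tau>-1\<bar> * \<bar>x - y\<bar>"
      by (simp add: right_diff_distrib[symmetric] abs_mult)
    also have "\<dots> \<le> 1 * \<bar>x - y\<bar>" using assms by (intro mult_right_mono) auto
    finally show ?thesis by simp
  qed
  show ?thesis unfolding e using h1 h2 by (simp add: max_def abs_le_iff)
qed

definition Rf :: "real \<Rightarrow> real \<Rightarrow> real" where
  "Rf x t = (if x \<ge> 0 then max 0 (t - x) else max 0 (x - t))"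

lemma check_knight:
  "check_fun \<tau> (x - t) - check_fun \<tau> x = - t * (\<tau> - (if x < 0 then 1 else 0)) + Rf x t"
  unfolding check_fun_def Rf_def by (auto simp: algebra_simps max_def)

lemma Rf_nonneg: "Rf x t \<ge> 0" by (simp add: Rf_def)
lemma Rf_bound: "Rf x t \<le> \<bar>t\<bar> * (if \<bar>x\<bar> \<le> \<bar>t\<bar> then 1 else 0)"
  by (auto simp: Rf_def max_def)
lemma Rf_le_abs: "Rf x t \<le> \<bar>t\<bar>" by (auto simp: Rf_def max_def)
lemma Rf_lip: "\<bar>Rf x t - Rf x t'\<bar> \<le> \<bar>t - t'\<bar> * (if \<bar>x\<bar> \<le> max \<bar>t\<bar> \<bar>t'\<bar> then 1 else 0)"
  by (auto simp: Rf_def max_def abs_le_iff)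
lemma Rf_low1: "t > 0 \<Longrightarrow> t/4 \<le> x \<Longrightarrow> x \<le> t/2 \<Longrightarrow> Rf x t \<ge> \<bar>t\<bar>/2"
  by (auto simp: Rf_def max_def)
lemma Rf_low2: "t < 0 \<Longrightarrow> t/2 \<le> x \<Longrightarrow> x \<le> t/4 \<Longrightarrow> Rf x t \<ge> \<bar>t\<bar>/2"
  by (auto simp: Rf_def max_def)


lemma Rf_meas[measurable]:
  assumes [measurable]: "g \<in> borel_measurable N" "h \<in> borel_measurable N"
  shows "(\<lambda>x. Rf (g x) (h x)) \<in> borel_measurable N"
  unfolding Rf_def by measurable

lemma check_meas[measurable]:
  assumes [measurable]: "g \<in> borel_measurable N"
  shows "(\<lambda>x. check_fun \<tau> (g x)) \<in> borel_measurable N"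
  unfolding check_fun_def by measurable

locale qr = prob_space M for M :: "'a measure" +
  fixes eps :: "nat \<Rightarrow> 'a \<Rightarrow> real" and f :: "real \<Rightarrow> real" and \<tau> :: real
  assumes indep: "indep_vars (\<lambda>_. borel) eps UNIV"
  and ident: "\<forall>i. distr M borel (eps i) = distr M borel (eps 0)"
  and dens: "distributed M lborel (eps 0) (\<lambda>x. ennreal (f x))"
  and fcont: "isCont f 0" and fpos: "f 0 > 0"
  and F0: "measure M {\<omega>\<in>space M. eps 0 \<omega> \<le> 0} = \<tau>"
  and tau_pos: "0 < \<tau>" and tau_lt1: "\<tau> < 1"
begin

lemma eps_meas[measurable]: "eps i \<in> borel_measurable M"
  using indep unfolding indep_vars_def by auto

lemma integrable_bdd:
  fixes g :: "'a \<Rightarrow> real"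
  assumes "g \<in> borel_measurable M" "\<And>x. x \<in> space M \<Longrightarrow> \<bar>g x\<bar> \<le> B"
  shows "integrable M g"
  using assms by (intro integrable_const_bound[where B=B]) auto

lemma prob_eps_ident:
  assumes "A \<in> sets borel"
  shows "prob {\<omega>\<in>space M. eps i \<omega> \<in> A} = prob {\<omega>\<in>space M. eps 0 \<omega> \<in> A}"
proof -
  have "prob {\<omega>\<in>space M. eps i \<omega> \<in> A} = measure (distr M borel (eps i)) A"
    using assms by (subst measure_distr) (auto intro!: arg_cong[where f="measure M"])
  also have "\<dots> = measure (distr M borel (eps 0)) A" using ident by metis
  also have "\<dots> = prob {\<omega>\<in>space M. eps 0 \<omega> \<in> A}"
    using assms by (subst measure_distr) (auto intro!: arg_cong[where f="measure M"])
  finally show ?thesis .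
qed

definition "f0 = f 0"

lemma delta1_ex: "\<exists>\<delta>>0. \<forall>x. \<bar>x\<bar> < \<delta> \<longrightarrow> f0/2 \<le> f x \<and> f x \<le> 2 * f0"
proof -
  have "f0 / 2 > 0" using fpos by (simp add: f0_def)
  then obtain \<delta> where d: "\<delta> > 0" "\<And>x. dist x 0 < \<delta> \<Longrightarrow> dist (f x) (f 0) < f0/2"
    using fcont unfolding continuous_at_eps_delta by blast
  have "\<forall>x. \<bar>x\<bar> < \<delta> \<longrightarrow> f0/2 \<le> f x \<and> f x \<le> 2 * f0"
  proof (intro allI impI)
    fix x :: real assume "\<bar>x\<bar> < \<delta>"
    then have "\<bar>f x - f0\<bar> < f0/2" using d(2)[of x] by (simp add: dist_real_def f0_def)
    then show "f0/2 \<le> f x \<and> f x \<le> 2 * f0" using fpos unfolding f0_def by arith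
  qed
  then show ?thesis using d(1) by blast
qed

definition "\<delta>1 = (SOME \<delta>. \<delta> > 0 \<and> (\<forall>x. \<bar>x\<bar> < \<delta> \<longrightarrow> f0/2 \<le> f x \<and> f x \<le> 2 * f0))"

lemma delta1: "\<delta>1 > 0" "\<bar>x\<bar> < \<delta>1 \<Longrightarrow> f0/2 \<le> f x" "\<bar>x\<bar> < \<delta>1 \<Longrightarrow> f x \<le> 2 * f0"
  using someI_ex[OF delta1_ex] unfolding \<delta>1_def[symmetric] by auto

lemma f0_pos: "f0 > 0" using fpos by (simp add: f0_def)

lemma prob_interval0:
  assumes "a \<le> b" "-\<delta>1 < a" "b < \<delta>1"
  shows "prob {\<omega>\<in>space M. eps 0 \<omega> \<in> {a..b}} \<ge> (b - a) * (f0/2)"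
    and "prob {\<omega>\<in>space M. eps 0 \<omega> \<in> {a..b}} \<le> (b - a) * (2*f0)"
proof -
  have e: "emeasure M (eps 0 -` {a..b} \<inter> space M) = (\<integral>\<^sup>+x. ennreal (f x) * indicator {a..b} x \<partial>lborel)"
    by (rule distributed_emeasure[OF dens]) auto
  have s: "{\<omega>\<in>space M. eps 0 \<omega> \<in> {a..b}} = eps 0 -` {a..b} \<inter> space M" by auto
  have lo: "(\<integral>\<^sup>+x. ennreal (f0/2) * indicator {a..b} x \<partial>lborel) \<le> (\<integral>\<^sup>+x. ennreal (f x) * indicator {a..b} x \<partial>lborel)"
  proof (rule nn_integral_mono)
    fix x show "ennreal (f0/2) * indicator {a..b} x \<le> ennreal (f x) * indicator {a..b} x"
      using delta1(2)[of x] assms by (auto simp: indicator_def intro: ennreal_leI)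
  qed
  have hi: "(\<integral>\<^sup>+x. ennreal (f x) * indicator {a..b} x \<partial>lborel) \<le> (\<integral>\<^sup>+x. ennreal (2*f0) * indicator {a..b} x \<partial>lborel)"
  proof (rule nn_integral_mono)
    fix x show "ennreal (f x) * indicator {a..b} x \<le> ennreal (2*f0) * indicator {a..b} x"
      using delta1(3)[of x] assms by (auto simp: indicator_def intro: ennreal_leI)
  qed
  have c1: "(\<integral>\<^sup>+x. ennreal (f0/2) * indicator {a..b} x \<partial>lborel) = ennreal ((b - a) * (f0/2))"
    using assms f0_pos by (subst nn_integral_cmult_indicator) (auto simp: ennreal_mult[symmetric] mult.commute)
  have c2: "(\<integral>\<^sup>+x. ennreal (2*f0) * indicator {a..b} x \<partial>lborel) = ennreal ((b - a) * (2*f0))"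
    using assms f0_pos by (subst nn_integral_cmult_indicator) (auto simp: ennreal_mult[symmetric] mult.commute)
  have "ennreal ((b - a) * (f0/2)) \<le> ennreal (prob {\<omega>\<in>space M. eps 0 \<omega> \<in> {a..b}})"
    using lo c1 e s by (simp add: emeasure_eq_measure)
  then show "prob {\<omega>\<in>space M. eps 0 \<omega> \<in> {a..b}} \<ge> (b - a) * (f0/2)"
    by (subst (asm) ennreal_le_iff) auto
  have "ennreal (prob {\<omega>\<in>space M. eps 0 \<omega> \<in> {a..b}}) \<le> ennreal ((b - a) * (2*f0))"
    using hi c2 e s by (simp add: emeasure_eq_measure)
  then show "prob {\<omega>\<in>space M. eps 0 \<omega> \<in> {a..b}} \<le> (b - a) * (2*f0)"
    using assms f0_pos by (subst (asm) ennreal_le_iff) auto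
qed

lemma prob_interval:
  assumes "a \<le> b" "-\<delta>1 < a" "b < \<delta>1"
  shows "prob {\<omega>\<in>space M. eps i \<omega> \<in> {a..b}} \<ge> (b - a) * (f0/2)"
    and "prob {\<omega>\<in>space M. eps i \<omega> \<in> {a..b}} \<le> (b - a) * (2*f0)"
  using prob_interval0[OF assms] prob_eps_ident[of "{a..b}" i] by auto

lemma prob_neg: "prob {\<omega>\<in>space M. eps i \<omega> < 0} = \<tau>"
proof -
  have z: "prob {\<omega>\<in>space M. eps 0 \<omega> \<in> {0..0}} = 0"
    using prob_interval0(2)[of 0 0] delta1(1) by (auto intro: antisym)
  have "prob {\<omega>\<in>space M. eps 0 \<omega> \<in> {..0}} = prob {\<omega>\<in>space M. eps 0 \<omega> \<in> {..<0}} + prob {\<omega>\<in>space M. eps 0 \<omega> \<in> {0..0}}"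
  proof -
    have "{\<omega>\<in>space M. eps 0 \<omega> \<in> {..0}} = {\<omega>\<in>space M. eps 0 \<omega> \<in> {..<0}} \<union> {\<omega>\<in>space M. eps 0 \<omega> \<in> {0..0}}"
      by auto
    then show ?thesis by (simp only:) (rule finite_measure_Union, auto)
  qed
  then have "prob {\<omega>\<in>space M. eps 0 \<omega> \<in> {..<0}} = \<tau>" using z F0 by simp
  then show ?thesis using prob_eps_ident[of "{..<0}" i] by simp
qed

end


context qr begin

lemma indep_pair:
  assumes hm: "\<And>i. h i \<in> borel_measurable borel" and "i \<noteq> j"
  shows "indep_vars (\<lambda>_. borel) (\<lambda>k \<omega>. h k (eps k \<omega>)) {i, j}"
proof -
  have "indep_vars (\<lambda>_. borel) (\<lambda>k \<omega>. h k (eps k \<omega>)) UNIV"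
    by (rule indep_vars_compose2[OF indep]) (simp add: hm)
  then show ?thesis by (rule indep_vars_subset) auto
qed

lemma indep_sum_sq:
  fixes h :: "nat \<Rightarrow> real \<Rightarrow> real"
  assumes hm: "\<And>i. h i \<in> borel_measurable borel"
   and hb: "\<And>i x. \<bar>h i x\<bar> \<le> B i"
   and h0: "\<And>i. expectation (\<lambda>\<omega>. h i (eps i \<omega>)) = 0"
   and fin: "finite I"
  shows "expectation (\<lambda>\<omega>. (\<Sum>i\<in>I. h i (eps i \<omega>))^2) = (\<Sum>i\<in>I. expectation (\<lambda>\<omega>. (h i (eps i \<omega>))^2))"
    and "integrable M (\<lambda>\<omega>. (\<Sum>i\<in>I. h i (eps i \<omega>))^2)"
proof -
  note hm[measurable]
  have intY: "integrable M (\<lambda>\<omega>. h i (eps i \<omega>))" for i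
    by (rule integrable_bdd[where B="B i"]) (auto simp: hb)
  have intYY: "integrable M (\<lambda>\<omega>. h i (eps i \<omega>) * h j (eps j \<omega>))" for i j
  proof (rule integrable_bdd[where B="B i * B j"])
    show "(\<lambda>\<omega>. h i (eps i \<omega>) * h j (eps j \<omega>)) \<in> borel_measurable M" by measurable
    fix x show "\<bar>h i (eps i x) * h j (eps j x)\<bar> \<le> B i * B j"
      unfolding abs_mult by (intro mult_mono hb) (auto intro: order.trans[OF abs_ge_zero hb])
  qed
  have sq: "(\<Sum>i\<in>I. h i (eps i \<omega>))^2 = (\<Sum>i\<in>I. \<Sum>j\<in>I. h i (eps i \<omega>) * h j (eps j \<omega>))" for \<omega>
    by (simp add: power2_eq_square sum_product)
  show "integrable M (\<lambda>\<omega>. (\<Sum>i\<in>I. h i (eps i \<omega>))^2)"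
    unfolding sq by (intro Bochner_Integration.integrable_sum intYY)
  have cross: "expectation (\<lambda>\<omega>. h i (eps i \<omega>) * h j (eps j \<omega>)) = (if i = j then expectation (\<lambda>\<omega>. (h i (eps i \<omega>))^2) else 0)" for i j
  proof (cases "i = j")
    case True then show ?thesis by (simp add: power2_eq_square)
  next
    case False
    have "expectation (\<lambda>\<omega>. \<Prod>k\<in>{i,j}. h k (eps k \<omega>)) = (\<Prod>k\<in>{i,j}. expectation (\<lambda>\<omega>. h k (eps k \<omega>)))"
      by (rule indep_vars_lebesgue_integral) (auto intro: indep_pair[OF hm False] intY)
    then show ?thesis using False h0 by simp
  qed
  have "expectation (\<lambda>\<omega>. (\<Sum>i\<in>I. h i (eps i \<omega>))^2) = (\<Sum>i\<in>I. \<Sum>j\<in>I. expectation (\<lambda>\<omega>. h i (eps i \<omega>) * h j (eps j \<omega>)))"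
    unfolding sq
    by (simp add: Bochner_Integration.integral_sum Bochner_Integration.integrable_sum intYY)
  also have "\<dots> = (\<Sum>i\<in>I. expectation (\<lambda>\<omega>. (h i (eps i \<omega>))^2))"
    unfolding cross using fin by (simp add: sum.delta)
  finally show "expectation (\<lambda>\<omega>. (\<Sum>i\<in>I. h i (eps i \<omega>))^2) = (\<Sum>i\<in>I. expectation (\<lambda>\<omega>. (h i (eps i \<omega>))^2))" .
qed

lemma indep_sum_dev:
  fixes h :: "nat \<Rightarrow> real \<Rightarrow> real"
  assumes hm: "\<And>i. h i \<in> borel_measurable borel"
   and hb: "\<And>i x. \<bar>h i x\<bar> \<le> B i"
   and h0: "\<And>i. expectation (\<lambda>\<omega>. h i (eps i \<omega>)) = 0"
   and fin: "finite I" and a: "a > 0"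
   and V: "\<And>i. i \<in> I \<Longrightarrow> expectation (\<lambda>\<omega>. (h i (eps i \<omega>))^2) \<le> V i"
  shows "prob {\<omega>\<in>space M. a \<le> \<bar>\<Sum>i\<in>I. h i (eps i \<omega>)\<bar>} \<le> (\<Sum>i\<in>I. V i) / a^2"
proof -
  note hm[measurable]
  have "prob {\<omega>\<in>space M. a^2 \<le> (\<Sum>i\<in>I. h i (eps i \<omega>))^2} \<le> expectation (\<lambda>\<omega>. (\<Sum>i\<in>I. h i (eps i \<omega>))^2) / a^2"
    using a by (intro integral_Markov_inequality_measure[where A="space M"] indep_sum_sq(2)[OF hm hb h0 fin]) auto
  also have "\<dots> \<le> (\<Sum>i\<in>I. V i) / a^2"
    unfolding indep_sum_sq(1)[OF hm hb h0 fin] using a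
    by (intro divide_right_mono sum_mono V) auto
  finally show ?thesis
  proof (rule order.trans[rotated], intro eq_refl arg_cong[where f=prob] Collect_cong conj_cong refl)
    fix \<omega> show "(a \<le> \<bar>\<Sum>i\<in>I. h i (eps i \<omega>)\<bar>) = (a^2 \<le> (\<Sum>i\<in>I. h i (eps i \<omega>))^2)"
      using abs_le_square_iff[of a "\<Sum>i\<in>I. h i (eps i \<omega>)"] a by simp
  qed
qed

end


definition ind :: "bool \<Rightarrow> real" where "ind b = (if b then 1 else 0)"

lemma ind_meas[measurable]: "Measurable.pred N P \<Longrightarrow> (\<lambda>x. ind (P x)) \<in> borel_measurable N"
  unfolding ind_def by measurable

lemma ind_simps[simp]: "ind True = 1" "ind False = 0" "ind b \<ge> 0" "ind b \<le> 1"
  by (auto simp: ind_def)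

context qr begin

lemma exp_ind:
  assumes "A \<in> sets borel"
  shows "expectation (\<lambda>\<omega>. ind (eps i \<omega> \<in> A)) = prob {\<omega>\<in>space M. eps i \<omega> \<in> A}"
proof -
  have "expectation (\<lambda>\<omega>. ind (eps i \<omega> \<in> A)) = expectation (indicator {\<omega>\<in>space M. eps i \<omega> \<in> A})"
    by (rule Bochner_Integration.integral_cong) (auto simp: ind_def indicator_def)
  also have "\<dots> = prob {\<omega>\<in>space M. eps i \<omega> \<in> A}" by (simp add: Int_absorb2 Collect_subset[unfolded Collect_conj_eq])
  finally show ?thesis .
qed

lemma exp_sign: "expectation (\<lambda>\<omega>. c * (\<tau> - ind (eps i \<omega> < 0))) = 0"
proof -
  have "expectation (\<lambda>\<omega>. ind (eps i \<omega> < 0)) = \<tau>"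
    using exp_ind[of "{..<0}" i] prob_neg[of i] by simp
  moreover have "integrable M (\<lambda>\<omega>. ind (eps i \<omega> < 0))"
    by (rule integrable_bdd[where B=1]) (auto simp: ind_def)
  ultimately show ?thesis by (simp add: prob_space)
qed

lemma integrable_Rf: "integrable M (\<lambda>\<omega>. Rf (eps i \<omega>) t)"
  by (rule integrable_bdd[where B="\<bar>t\<bar>"]) (use Rf_le_abs[of _ t] Rf_nonneg in auto)

lemma exp_Rf_low:
  assumes "\<bar>t\<bar> < \<delta>1"
  shows "expectation (\<lambda>\<omega>. Rf (eps i \<omega>) t) \<ge> f0 * t^2 / 16"
proof (cases "t = 0")
  case True then show ?thesis by (simp add: Rf_def)
next
  case False
  define J where "J = (if t > 0 then {t/4..t/2} else {t/2..t/4})"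
  have Jb[measurable]: "J \<in> sets borel" by (simp add: J_def)
  have pJ: "prob {\<omega>\<in>space M. eps i \<omega> \<in> J} \<ge> (\<bar>t\<bar>/4) * (f0/2)"
  proof (cases "t > 0")
    case True
    then show ?thesis using prob_interval(1)[of "t/4" "t/2" i] assms delta1(1) by (simp add: J_def)
  next
    case False
    with \<open>t \<noteq> 0\<close> have "t < 0" by simp
    then show ?thesis using prob_interval(1)[of "t/2" "t/4" i] assms delta1(1) by (simp add: J_def)
  qed
  have low: "Rf x t \<ge> (\<bar>t\<bar>/2) * ind (x \<in> J)" for x
    using Rf_low1[of t x] Rf_low2[of t x] Rf_nonneg[of x t] \<open>t \<noteq> 0\<close>
    by (auto simp: ind_def J_def split: if_splits)
  have "expectation (\<lambda>\<omega>. (\<bar>t\<bar>/2) * ind (eps i \<omega> \<in> J)) \<le> expectation (\<lambda>\<omega>. Rf (eps i \<omega>) t)"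
    by (intro integral_mono integrable_Rf low integrable_bdd[where B="\<bar>t\<bar>/2"]) (auto simp: ind_def Jb)
  moreover have "expectation (\<lambda>\<omega>. (\<bar>t\<bar>/2) * ind (eps i \<omega> \<in> J)) = (\<bar>t\<bar>/2) * prob {\<omega>\<in>space M. eps i \<omega> \<in> J}"
    using exp_ind[OF Jb, of i] by simp
  moreover have "(\<bar>t\<bar>/2) * ((\<bar>t\<bar>/4) * (f0/2)) \<le> (\<bar>t\<bar>/2) * prob {\<omega>\<in>space M. eps i \<omega> \<in> J}"
    using pJ by (intro mult_left_mono) auto
  moreover have "(\<bar>t\<bar>/2) * ((\<bar>t\<bar>/4) * (f0/2)) = f0 * t^2 / 16"
  proof -
    have "(\<bar>t\<bar>/2) * ((\<bar>t\<bar>/4) * (f0/2)) = f0 * (\<bar>t\<bar> * \<bar>t\<bar>) / 16" by simp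
    also have "\<dots> = f0 * t^2 / 16" by (simp add: power2_eq_square)
    finally show ?thesis .
  qed
  ultimately show ?thesis by linarith
qed

lemma exp_small:
  assumes "0 \<le> h" "h < \<delta>1"
  shows "expectation (\<lambda>\<omega>. ind (\<bar>eps i \<omega>\<bar> \<le> h)) \<le> 4 * f0 * h"
proof -
  have "expectation (\<lambda>\<omega>. ind (\<bar>eps i \<omega>\<bar> \<le> h)) = expectation (\<lambda>\<omega>. ind (eps i \<omega> \<in> {-h..h}))"
    by (rule Bochner_Integration.integral_cong) (auto simp: ind_def abs_le_iff)
  also have "\<dots> = prob {\<omega>\<in>space M. eps i \<omega> \<in> {-h..h}}" by (rule exp_ind) simp
  also have "\<dots> \<le> (h - (-h)) * (2*f0)" using prob_interval(2)[of "-h" h i] assms by simp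
  finally show ?thesis by (simp add: mult_ac)
qed

lemma integrable_a: "integrable M (\<lambda>\<omega>. check_fun \<tau> (eps i \<omega> - t) - check_fun \<tau> (eps i \<omega>))"
proof (rule integrable_bdd[where B="\<bar>t\<bar>"])
  fix x show "\<bar>check_fun \<tau> (eps i x - t) - check_fun \<tau> (eps i x)\<bar> \<le> \<bar>t\<bar>"
    using check_lip[OF tau_pos tau_lt1, of "eps i x - t" "eps i x"] by simp
qed measurable

lemma exp_a: "expectation (\<lambda>\<omega>. check_fun \<tau> (eps i \<omega> - t) - check_fun \<tau> (eps i \<omega>)) = expectation (\<lambda>\<omega>. Rf (eps i \<omega>) t)"
proof -
  have "expectation (\<lambda>\<omega>. check_fun \<tau> (eps i \<omega> - t) - check_fun \<tau> (eps i \<omega>))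
      = expectation (\<lambda>\<omega>. (-t) * (\<tau> - ind (eps i \<omega> < 0)) + Rf (eps i \<omega>) t)"
    by (rule Bochner_Integration.integral_cong) (auto simp: check_knight ind_def)
  also have "\<dots> = expectation (\<lambda>\<omega>. (-t) * (\<tau> - ind (eps i \<omega> < 0))) + expectation (\<lambda>\<omega>. Rf (eps i \<omega>) t)"
  proof (rule Bochner_Integration.integral_add[OF _ integrable_Rf])
    have "integrable M (\<lambda>\<omega>. \<tau> - ind (eps i \<omega> < 0))"
      by (rule integrable_bdd[where B=2]) (use tau_pos tau_lt1 in \<open>auto simp: ind_def\<close>)
    then show "integrable M (\<lambda>\<omega>. (-t) * (\<tau> - ind (eps i \<omega> < 0)))" by simp
  qed
  finally show ?thesis using exp_sign[of "-t" i] by simp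
qed

end


locale qr2 = qr M eps f \<tau> for M :: "'a measure" and eps f \<tau> +
  fixes p d :: nat and X :: "nat \<Rightarrow> nat \<Rightarrow> nat \<Rightarrow> real" and U :: "nat \<times> nat \<Rightarrow> nat \<times> nat \<Rightarrow> real"
  assumes pd: "p \<ge> 1" "d \<ge> 1"
  and Upd: "pos_def (idx p d) U"
  and Ulim: "\<forall>a\<in>idx p d. \<forall>c\<in>idx p d. (\<lambda>n. gram n X a c) \<longlonglongrightarrow> U a c"
  and A3: "(\<lambda>n. Max ((\<lambda>i. pnorm p d (X i)) ` {..<n}) / sqrt (real n)) \<longlonglongrightarrow> 0"
begin

definition quad :: "(nat \<times> nat \<Rightarrow> nat \<times> nat \<Rightarrow> real) \<Rightarrow> (nat \<Rightarrow> nat \<Rightarrow> real) \<Rightarrow> real" where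
  "quad A v = (\<Sum>a\<in>idx p d. \<Sum>c\<in>idx p d. uc v a * A a c * uc v c)"

lemma idx_ne: "idx p d \<noteq> {}"
proof -
  have "(0,0) \<in> idx p d" using pd by (auto simp: idx_def)
  then show ?thesis by auto
qed

lemma pnorm_sq: "(pnorm p d v)^2 = (\<Sum>a\<in>idx p d. (uc v a)^2)"
  unfolding pnorm_L2 L2_set_def by (simp add: sum_nonneg)

lemma uc_le_pnorm: "a \<in> idx p d \<Longrightarrow> \<bar>uc v a\<bar> \<le> pnorm p d v"
  using comp_le_pnorm[of "fst a" p "snd a" d v] by (auto simp: idx_def uc_def)

lemma sum_sq_tt:
  assumes "n > 0"
  shows "(\<Sum>i<n. (lin p d (X i) v / sqrt n)^2) = quad (gram n X) v"
proof -
  have "(\<Sum>i<n. (lin p d (X i) v / sqrt n)^2) = (\<Sum>i<n. (lin p d (X i) v)^2) / n"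
    using assms by (simp add: power_divide sum_divide_distrib)
  also have "(\<Sum>i<n. (lin p d (X i) v)^2) = (\<Sum>i<n. \<Sum>a\<in>idx p d. \<Sum>c\<in>idx p d. uc v a * (uc (X i) a * uc (X i) c) * uc v c)"
    unfolding lin_sum power2_eq_square sum_product by (simp add: mult_ac)
  also have "\<dots> = (\<Sum>a\<in>idx p d. \<Sum>c\<in>idx p d. uc v a * (\<Sum>i<n. uc (X i) a * uc (X i) c) * uc v c)"
    by (subst sum.swap) (simp add: sum.swap[of _ "{..<n}"] sum_distrib_left sum_distrib_right)
  finally show ?thesis
    unfolding quad_def gram_def by (simp add: sum_divide_distrib[symmetric] uc_def mult_ac)
qed

lemma trace_eq: "(\<Sum>i<n. (pnorm p d (X i))^2) / n = (\<Sum>a\<in>idx p d. gram n X a a)"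
  unfolding pnorm_sq gram_def
  by (subst sum.swap) (simp add: sum_divide_distrib uc_def power2_eq_square)

definition "c0 = (SOME c. c > 0 \<and> (\<forall>v. (\<Sum>a\<in>idx p d. \<Sum>b\<in>idx p d. v a * U a b * v b) \<ge> c * (\<Sum>a\<in>idx p d. (v a)^2)))"

lemma c0: "c0 > 0" "quad U v \<ge> c0 * (pnorm p d v)^2"
proof -
  have ex: "\<exists>c>0. \<forall>v. (\<Sum>a\<in>idx p d. \<Sum>b\<in>idx p d. v a * U a b * v b) \<ge> c * (\<Sum>a\<in>idx p d. (v a)^2)"
    by (rule posdef_uniform[OF finite_idx idx_ne Upd])
  note * = someI_ex[OF ex, folded c0_def]
  show "c0 > 0" using * by blast
  show "quad U v \<ge> c0 * (pnorm p d v)^2" using * unfolding quad_def pnorm_sq by blast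
qed

lemma quad_diff: "\<bar>quad A v - quad B v\<bar> \<le> (pnorm p d v)^2 * (\<Sum>a\<in>idx p d. \<Sum>c\<in>idx p d. \<bar>A a c - B a c\<bar>)"
proof -
  have "\<bar>quad A v - quad B v\<bar> = \<bar>\<Sum>a\<in>idx p d. \<Sum>c\<in>idx p d. uc v a * (A a c - B a c) * uc v c\<bar>"
    unfolding quad_def by (simp add: sum_subtractf[symmetric] algebra_simps)
  also have "\<dots> \<le> (\<Sum>a\<in>idx p d. \<Sum>c\<in>idx p d. \<bar>uc v a * (A a c - B a c) * uc v c\<bar>)"
    by (rule order.trans[OF sum_abs sum_mono[OF sum_abs]])
  also have "\<dots> \<le> (\<Sum>a\<in>idx p d. \<Sum>c\<in>idx p d. (pnorm p d v)^2 * \<bar>A a c - B a c\<bar>)"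
  proof (intro sum_mono)
    fix a c assume "a \<in> idx p d" "c \<in> idx p d"
    then have "\<bar>uc v a\<bar> * \<bar>uc v c\<bar> \<le> pnorm p d v * pnorm p d v"
      by (intro mult_mono uc_le_pnorm) auto
    then have "(\<bar>uc v a\<bar> * \<bar>uc v c\<bar>) * \<bar>A a c - B a c\<bar> \<le> (pnorm p d v * pnorm p d v) * \<bar>A a c - B a c\<bar>"
      by (rule mult_right_mono) simp
    then show "\<bar>uc v a * (A a c - B a c) * uc v c\<bar> \<le> (pnorm p d v)^2 * \<bar>A a c - B a c\<bar>"
      by (simp add: abs_mult power2_eq_square mult_ac)
  qed
  finally show ?thesis by (simp add: sum_distrib_left)
qed

lemma ev_quad: "eventually (\<lambda>n. \<forall>v. quad (gram n X) v \<ge> (c0/2) * (pnorm p d v)^2) sequentially"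
proof -
  have "((\<lambda>n. \<Sum>a\<in>idx p d. \<Sum>c\<in>idx p d. \<bar>gram n X a c - U a c\<bar>) \<longlongrightarrow> (\<Sum>a\<in>idx p d. \<Sum>c\<in>idx p d. \<bar>U a c - U a c\<bar>)) sequentially"
    using Ulim by (intro tendsto_sum tendsto_rabs tendsto_diff tendsto_const) auto
  then have "((\<lambda>n. \<Sum>a\<in>idx p d. \<Sum>c\<in>idx p d. \<bar>gram n X a c - U a c\<bar>) \<longlongrightarrow> 0) sequentially" by simp
  moreover have "c0/2 > 0" using c0(1) by simp
  ultimately have ev: "eventually (\<lambda>n. (\<Sum>a\<in>idx p d. \<Sum>c\<in>idx p d. \<bar>gram n X a c - U a c\<bar>) < c0/2) sequentially"
    by (rule order_tendstoD)
  show ?thesis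
  proof (rule eventually_mono[OF ev], intro allI)
    fix n v assume n: "(\<Sum>a\<in>idx p d. \<Sum>c\<in>idx p d. \<bar>gram n X a c - U a c\<bar>) < c0/2"
    have "\<bar>quad (gram n X) v - quad U v\<bar> \<le> (pnorm p d v)^2 * (c0/2)"
      by (rule order.trans[OF quad_diff], rule mult_left_mono) (use n in auto)
    then show "quad (gram n X) v \<ge> (c0/2) * (pnorm p d v)^2" 
    proof -
      have e1: "(pnorm p d v)^2 * (c0/2) = c0/2 * (pnorm p d v)^2" by simp
      have e2: "c0 * (pnorm p d v)^2 = 2 * (c0/2 * (pnorm p d v)^2)" by simp
      show ?thesis using \<open>\<bar>quad (gram n X) v - quad U v\<bar> \<le> _\<close> c0(2)[of v] unfolding e1 e2 abs_le_iff by linarith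
    qed
  qed
qed

definition "Tb = (\<Sum>a\<in>idx p d. U a a) + 1"

lemma ev_trace: "eventually (\<lambda>n. (\<Sum>i<n. (pnorm p d (X i))^2) / n \<le> Tb) sequentially"
proof -
  have "((\<lambda>n. \<Sum>a\<in>idx p d. gram n X a a) \<longlongrightarrow> (\<Sum>a\<in>idx p d. U a a)) sequentially"
    using Ulim by (intro tendsto_sum) auto
  then have "eventually (\<lambda>n. (\<Sum>a\<in>idx p d. gram n X a a) < Tb) sequentially"
    unfolding Tb_def by (rule order_tendstoD) simp
  then show ?thesis unfolding trace_eq by (rule eventually_mono) simp
qed

lemma Tb_pos: "Tb > 0"
proof -
  have "0 \<le> (\<Sum>a\<in>idx p d. U a a)"
  proof (rule sum_nonneg)
    fix a assume a: "a \<in> idx p d"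
    define e where "e b = (if b = a then 1 else 0::real)" for b
    have "0 < (\<Sum>x\<in>idx p d. \<Sum>c\<in>idx p d. e x * U x c * e c)"
      using a by (intro conjunct2[OF Upd[unfolded pos_def_def], rule_format]) (auto simp: e_def)
    also have "\<dots> = (\<Sum>x\<in>idx p d. e x * U x a)"
    proof (rule sum.cong[OF refl])
      fix x
      have "(\<Sum>c\<in>idx p d. e x * U x c * e c) = (\<Sum>c\<in>idx p d. if c = a then e x * U x a else 0)"
        by (rule sum.cong) (auto simp: e_def)
      then show "(\<Sum>c\<in>idx p d. e x * U x c * e c) = e x * U x a" using a by simp
    qed
    also have "\<dots> = (\<Sum>x\<in>idx p d. if x = a then U a a else 0)"
      by (rule sum.cong) (auto simp: e_def)
    also have "\<dots> = U a a" using a by simp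
    finally show "0 \<le> U a a" by simp
  qed
  then show ?thesis by (simp add: Tb_def)
qed

lemma ev_maxX:
  assumes "\<eta> > 0"
  shows "eventually (\<lambda>n. \<forall>i<n. pnorm p d (X i) / sqrt n \<le> \<eta>) sequentially"
proof -
  have "eventually (\<lambda>n. Max ((\<lambda>i. pnorm p d (X i)) ` {..<n}) / sqrt (real n) < \<eta>) sequentially"
    using A3 assms by (rule order_tendstoD)
  then show ?thesis
  proof (rule eventually_mono, intro allI impI)
    fix n i assume h: "Max ((\<lambda>i. pnorm p d (X i)) ` {..<n}) / sqrt (real n) < \<eta>" and i: "i < n"
    have "pnorm p d (X i) \<le> Max ((\<lambda>i. pnorm p d (X i)) ` {..<n})" using i by (intro Max_ge) auto
    then have "pnorm p d (X i) / sqrt n \<le> Max ((\<lambda>i. pnorm p d (X i)) ` {..<n}) / sqrt n"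
      by (intro divide_right_mono) auto
    then show "pnorm p d (X i) / sqrt n \<le> \<eta>" using h by simp
  qed
qed

end


context qr2 begin

definition "tt (n::nat) v i = lin p d (X i) v / sqrt (real n)"
definition "Dv (n::nat) \<omega> v = (\<Sum>i<n. check_fun \<tau> (eps i \<omega> - tt n v i) - check_fun \<tau> (eps i \<omega>))"
definition "Zv (n::nat) \<omega> = (\<lambda>j k. (\<Sum>i<n. X i j k * (\<tau> - ind (eps i \<omega> < 0))) / sqrt (real n))"
definition "Lsum (n::nat) h \<omega> = (\<Sum>i<n. (pnorm p d (X i) / sqrt n) * ind (\<bar>eps i \<omega>\<bar> \<le> h * pnorm p d (X i) / sqrt n))"

lemma lin_Zv: "lin p d (Zv n \<omega>) v = (\<Sum>i<n. tt n v i * (\<tau> - ind (eps i \<omega> < 0)))"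
  unfolding Zv_def tt_def lin_def
  by (simp add: sum_divide_distrib[symmetric] sum_distrib_left sum_distrib_right mult_ac
      sum.swap[of _ "{..<n}"])

lemma Dv_split: "Dv n \<omega> v = - lin p d (Zv n \<omega>) v + (\<Sum>i<n. Rf (eps i \<omega>) (tt n v i))"
  unfolding Dv_def lin_Zv check_knight
  by (simp add: sum.distrib sum_negf ind_def sum_subtractf)

lemma tt_bound: "\<bar>tt n v i\<bar> \<le> pnorm p d (X i) * pnorm p d v / sqrt n"
proof -
  have "\<bar>lin p d (X i) v / sqrt n\<bar> = \<bar>lin p d (X i) v\<bar> / sqrt n" by (simp add: abs_divide)
  then show ?thesis unfolding tt_def using divide_right_mono[OF lin_CS, of "sqrt n" p d "X i" v] by simp
qed

lemma tt_diff: "tt n v i - tt n w i = tt n (\<lambda>j k. v j k - w j k) i"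
  unfolding tt_def by (simp add: lin_diff diff_divide_distrib)

lemma Dv_lip:
  assumes v: "pnorm p d v \<le> h" and w: "pnorm p d w \<le> h"
  shows "\<bar>Dv n \<omega> v - Dv n \<omega> w\<bar> \<le> pnorm p d (\<lambda>j k. v j k - w j k) * (pnorm p d (Zv n \<omega>) + Lsum n h \<omega>)"
proof -
  define u where "u = (\<lambda>j k. v j k - w j k)"
  have 1: "\<bar>lin p d (Zv n \<omega>) v - lin p d (Zv n \<omega>) w\<bar> \<le> pnorm p d (Zv n \<omega>) * pnorm p d u"
    unfolding u_def lin_diff[symmetric] by (rule lin_CS)
  have 2: "\<bar>Rf (eps i \<omega>) (tt n v i) - Rf (eps i \<omega>) (tt n w i)\<bar>
      \<le> pnorm p d u * ((pnorm p d (X i) / sqrt n) * ind (\<bar>eps i \<omega>\<bar> \<le> h * pnorm p d (X i) / sqrt n))" for i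
  proof -
    have m: "max \<bar>tt n v i\<bar> \<bar>tt n w i\<bar> \<le> h * pnorm p d (X i) / sqrt n"
    proof -
      have "pnorm p d v * pnorm p d (X i) \<le> h * pnorm p d (X i)"
        by (rule mult_right_mono) (use v in auto)
      then have "pnorm p d (X i) * pnorm p d v / sqrt n \<le> h * pnorm p d (X i) / sqrt n"
        by (simp add: divide_right_mono mult.commute)
      moreover have "pnorm p d w * pnorm p d (X i) \<le> h * pnorm p d (X i)"
        by (rule mult_right_mono) (use w in auto)
      then have "pnorm p d (X i) * pnorm p d w / sqrt n \<le> h * pnorm p d (X i) / sqrt n"
        by (simp add: divide_right_mono mult.commute)
      ultimately show ?thesis using tt_bound[of n v i] tt_bound[of n w i] by simp
    qed
    have d: "\<bar>tt n v i - tt n w i\<bar> \<le> pnorm p d (X i) * pnorm p d u / sqrt n"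
      unfolding tt_diff u_def by (rule tt_bound)
    have "\<bar>Rf (eps i \<omega>) (tt n v i) - Rf (eps i \<omega>) (tt n w i)\<bar>
        \<le> \<bar>tt n v i - tt n w i\<bar> * (if \<bar>eps i \<omega>\<bar> \<le> max \<bar>tt n v i\<bar> \<bar>tt n w i\<bar> then 1 else 0)"
      by (rule Rf_lip)
    also have "\<dots> \<le> (pnorm p d (X i) * pnorm p d u / sqrt n) * ind (\<bar>eps i \<omega>\<bar> \<le> h * pnorm p d (X i) / sqrt n)"
      using m d by (auto simp: ind_def)
    finally show ?thesis by (simp add: mult_ac)
  qed
  have "\<bar>Dv n \<omega> v - Dv n \<omega> w\<bar> \<le> \<bar>lin p d (Zv n \<omega>) v - lin p d (Zv n \<omega>) w\<bar>
      + \<bar>\<Sum>i<n. Rf (eps i \<omega>) (tt n v i) - Rf (eps i \<omega>) (tt n w i)\<bar>"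
    unfolding Dv_split by (simp add: sum_subtractf)
  also have "\<dots> \<le> pnorm p d (Zv n \<omega>) * pnorm p d u
      + (\<Sum>i<n. pnorm p d u * ((pnorm p d (X i) / sqrt n) * ind (\<bar>eps i \<omega>\<bar> \<le> h * pnorm p d (X i) / sqrt n)))"
    by (intro add_mono 1 order.trans[OF sum_abs] sum_mono 2)
  also have "\<dots> = pnorm p d u * (pnorm p d (Zv n \<omega>) + Lsum n h \<omega>)"
    unfolding Lsum_def by (simp add: sum_distrib_left algebra_simps)
  finally show ?thesis unfolding u_def .
qed

end


context qr2 begin

lemma Dv_meas[measurable]: "(\<lambda>\<omega>. Dv n \<omega> v) \<in> borel_measurable M"
  unfolding Dv_def by measurable

lemma Dv_int: "integrable M (\<lambda>\<omega>. Dv n \<omega> v)"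
  unfolding Dv_def by (intro Bochner_Integration.integrable_sum integrable_a)

lemma E_Dv: "expectation (\<lambda>\<omega>. Dv n \<omega> v) = (\<Sum>i<n. expectation (\<lambda>\<omega>. Rf (eps i \<omega>) (tt n v i)))"
  unfolding Dv_def by (simp add: Bochner_Integration.integral_sum integrable_a exp_a)

lemma E_Dv_low:
  assumes n: "n > 0" and small: "\<forall>i<n. \<bar>tt n v i\<bar> < \<delta>1"
  shows "expectation (\<lambda>\<omega>. Dv n \<omega> v) \<ge> (f0/16) * quad (gram n X) v"
proof -
  have "(f0/16) * quad (gram n X) v = (\<Sum>i<n. f0 * (tt n v i)^2 / 16)"
    unfolding sum_sq_tt[OF n, symmetric] tt_def by (simp add: sum_distrib_left sum_divide_distrib)
  also have "\<dots> \<le> (\<Sum>i<n. expectation (\<lambda>\<omega>. Rf (eps i \<omega>) (tt n v i)))"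
    using small by (intro sum_mono exp_Rf_low) auto
  finally show ?thesis unfolding E_Dv .
qed

lemma sq_bound2: "\<bar>y\<bar> \<le> 2 * \<bar>t\<bar> \<Longrightarrow> y^2 \<le> 4 * (t::real)^2"
proof -
  assume h: "\<bar>y\<bar> \<le> 2 * \<bar>t\<bar>"
  have "\<bar>y\<bar>^2 \<le> (2 * \<bar>t\<bar>)^2" by (rule power_mono[OF h]) simp
  then show ?thesis by (simp add: power_mult_distrib)
qed

lemma abs_exp_le:
  fixes g :: "'a \<Rightarrow> real"
  assumes "integrable M g" "\<And>x. x \<in> space M \<Longrightarrow> \<bar>g x\<bar> \<le> B"
  shows "\<bar>expectation g\<bar> \<le> B"
proof -
  have "\<bar>expectation g\<bar> \<le> expectation (\<lambda>x. \<bar>g x\<bar>)"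
    using integral_norm_bound[of M g] by simp
  also have "\<dots> \<le> expectation (\<lambda>x. B)"
    using assms by (intro integral_mono) auto
  finally show ?thesis by (simp add: prob_space)
qed

lemma Dv_dev:
  assumes n: "n > 0" and a: "a > 0"
  shows "prob {\<omega>\<in>space M. a \<le> \<bar>Dv n \<omega> v - expectation (\<lambda>\<omega>. Dv n \<omega> v)\<bar>} \<le> 4 * quad (gram n X) v / a^2"
proof -
  define m where "m i = expectation (\<lambda>\<omega>. check_fun \<tau> (eps i \<omega> - tt n v i) - check_fun \<tau> (eps i \<omega>))" for i
  define h where "h i x = check_fun \<tau> (x - tt n v i) - check_fun \<tau> x - m i" for i x
  have am: "\<bar>check_fun \<tau> (x - t) - check_fun \<tau> x\<bar> \<le> \<bar>t\<bar>" for x t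
    using check_lip[OF tau_pos tau_lt1, of "x - t" x] by simp
  have mb: "\<bar>m i\<bar> \<le> \<bar>tt n v i\<bar>" for i
    unfolding m_def by (rule abs_exp_le[OF integrable_a am])
  have hm: "h i \<in> borel_measurable borel" for i unfolding h_def by measurable
  have hb: "\<bar>h i x\<bar> \<le> 2 * \<bar>tt n v i\<bar>" for i x
    using am[of x "tt n v i"] mb[of i] unfolding h_def by linarith
  have h0: "expectation (\<lambda>\<omega>. h i (eps i \<omega>)) = 0" for i
    unfolding h_def m_def by (simp add: Bochner_Integration.integral_diff integrable_a prob_space)
  have V: "expectation (\<lambda>\<omega>. (h i (eps i \<omega>))^2) \<le> 4 * (tt n v i)^2" for i
  proof -
    have "expectation (\<lambda>\<omega>. (h i (eps i \<omega>))^2) \<le> expectation (\<lambda>\<omega>. 4 * (tt n v i)^2)"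
    proof (rule integral_mono)
      show "integrable M (\<lambda>\<omega>. (h i (eps i \<omega>))^2)"
      proof (rule integrable_bdd[where B="4 * (tt n v i)^2"])
        show "(\<lambda>\<omega>. (h i (eps i \<omega>))^2) \<in> borel_measurable M" using hm by measurable
        fix x
        show "\<bar>(h i (eps i x))^2\<bar> \<le> 4 * (tt n v i)^2" using sq_bound2[OF hb] by simp
      qed
      fix x
      show "(h i (eps i x))^2 \<le> 4 * (tt n v i)^2" by (rule sq_bound2[OF hb])
    qed simp
    then show ?thesis by (simp add: prob_space)
  qed
  have "prob {\<omega>\<in>space M. a \<le> \<bar>\<Sum>i\<in>{..<n}. h i (eps i \<omega>)\<bar>} \<le> (\<Sum>i\<in>{..<n}. 4 * (tt n v i)^2) / a^2"
    by (rule indep_sum_dev[OF hm hb h0 _ a V]) auto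
  also have "(\<Sum>i\<in>{..<n}. 4 * (tt n v i)^2) = 4 * quad (gram n X) v"
  proof -
    have "(\<Sum>i\<in>{..<n}. (tt n v i)^2) = quad (gram n X) v"
      unfolding tt_def by (rule sum_sq_tt[OF n])
    then show ?thesis by (simp only: sum_distrib_left[symmetric])
  qed
  also have "(\<lambda>\<omega>. \<Sum>i\<in>{..<n}. h i (eps i \<omega>)) = (\<lambda>\<omega>. Dv n \<omega> v - expectation (\<lambda>\<omega>. Dv n \<omega> v))"
  proof -
    have "expectation (\<lambda>\<omega>. Dv n \<omega> v) = (\<Sum>i<n. m i)"
      unfolding Dv_def m_def by (rule Bochner_Integration.integral_sum) (rule integrable_a)
    then show ?thesis unfolding h_def by (simp add: Dv_def sum_subtractf)
  qed
  finally show ?thesis .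
qed

end


context qr2 begin

lemma Zv_prob:
  assumes n: "n > 0" and Zb: "Zb > 0"
  shows "prob {\<omega>\<in>space M. Zb^2 \<le> (pnorm p d (Zv n \<omega>))^2} \<le> ((\<Sum>i<n. (pnorm p d (X i))^2) / n) / Zb^2"
proof -
  define hh where "hh a i (x::real) = (uc (X i) a / sqrt n) * (\<tau> - ind (x < 0))" for a i x
  have hm: "hh a i \<in> borel_measurable borel" for a i unfolding hh_def by measurable
  have sgn: "\<bar>\<tau> - ind (x < 0)\<bar> \<le> 1" for x using tau_pos tau_lt1 by (auto simp: ind_def)
  have hb: "\<bar>hh a i x\<bar> \<le> \<bar>uc (X i) a / sqrt n\<bar>" for a i x
  proof -
    have "\<bar>uc (X i) a\<bar> * \<bar>\<tau> - ind (x < 0)\<bar> \<le> \<bar>uc (X i) a\<bar>" by (rule mult_left_le[OF sgn]) simp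
    then show ?thesis unfolding hh_def abs_mult by (simp add: divide_right_mono)
  qed
  have h0: "expectation (\<lambda>\<omega>. hh a i (eps i \<omega>)) = 0" for a i
    unfolding hh_def by (rule exp_sign)
  have ucZ: "uc (Zv n \<omega>) a = (\<Sum>i\<in>{..<n}. hh a i (eps i \<omega>))" for a \<omega>
    unfolding Zv_def uc_def hh_def by (simp add: sum_divide_distrib mult_ac)
  have E1: "expectation (\<lambda>\<omega>. (uc (Zv n \<omega>) a)^2) \<le> (\<Sum>i<n. (uc (X i) a)^2 / n)" for a
  proof -
    have "expectation (\<lambda>\<omega>. (uc (Zv n \<omega>) a)^2) = (\<Sum>i\<in>{..<n}. expectation (\<lambda>\<omega>. (hh a i (eps i \<omega>))^2))"
      unfolding ucZ by (rule indep_sum_sq(1)[OF hm hb h0]) simp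
    also have "\<dots> \<le> (\<Sum>i<n. (uc (X i) a)^2 / n)"
    proof (rule sum_mono)
      fix i
      have b: "(hh a i x)^2 \<le> (uc (X i) a)^2 / n" for x
      proof -
        have "\<bar>hh a i x\<bar>^2 \<le> \<bar>uc (X i) a / sqrt n\<bar>^2" by (rule power_mono[OF hb]) simp
        then show ?thesis using n by (simp add: power_divide)
      qed
      have "expectation (\<lambda>\<omega>. (hh a i (eps i \<omega>))^2) \<le> expectation (\<lambda>\<omega>. (uc (X i) a)^2 / n)"
      proof (rule integral_mono[OF _ _ b])
        show "integrable M (\<lambda>\<omega>. (hh a i (eps i \<omega>))^2)"
          by (rule integrable_bdd[where B="(uc (X i) a)^2 / n"]) (use hm b in auto)
      qed simp
      then show "expectation (\<lambda>\<omega>. (hh a i (eps i \<omega>))^2) \<le> (uc (X i) a)^2 / n" by (simp add: prob_space)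
    qed
    finally show ?thesis .
  qed
  have intZ: "integrable M (\<lambda>\<omega>. (uc (Zv n \<omega>) a)^2)" for a
    unfolding ucZ by (rule indep_sum_sq(2)[OF hm hb h0]) simp
  have psq: "(pnorm p d (Zv n \<omega>))^2 = (\<Sum>a\<in>idx p d. (uc (Zv n \<omega>) a)^2)" for \<omega> by (rule pnorm_sq)
  have "prob {\<omega>\<in>space M. Zb^2 \<le> (pnorm p d (Zv n \<omega>))^2} \<le> expectation (\<lambda>\<omega>. (pnorm p d (Zv n \<omega>))^2) / Zb^2"
    unfolding psq using Zb
    by (intro integral_Markov_inequality_measure[where A="space M"] Bochner_Integration.integrable_sum intZ)
       (auto intro!: AE_I2 sum_nonneg)
  also have "expectation (\<lambda>\<omega>. (pnorm p d (Zv n \<omega>))^2) \<le> (\<Sum>a\<in>idx p d. \<Sum>i<n. (uc (X i) a)^2 / n)"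
    unfolding psq by (simp add: Bochner_Integration.integral_sum intZ sum_mono E1)
  also have "(\<Sum>a\<in>idx p d. \<Sum>i<n. (uc (X i) a)^2 / n) = (\<Sum>i<n. (pnorm p d (X i))^2) / n"
    unfolding pnorm_sq by (subst sum.swap) (simp add: sum_divide_distrib)
  finally show ?thesis using Zb by (simp add: divide_right_mono)
qed

lemma Lsum_meas[measurable]: "(\<lambda>\<omega>. Lsum n h \<omega>) \<in> borel_measurable M"
  unfolding Lsum_def by measurable

lemma L_prob:
  assumes n: "n > 0" and Lb: "Lb > 0" and h: "h \<ge> 0"
    and small: "\<forall>i<n. h * pnorm p d (X i) / sqrt n < \<delta>1"
  shows "prob {\<omega>\<in>space M. Lb \<le> Lsum n h \<omega>} \<le> (4 * f0 * h * ((\<Sum>i<n. (pnorm p d (X i))^2) / n)) / Lb"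
proof -
  have int1: "integrable M (\<lambda>\<omega>. ind (\<bar>eps i \<omega>\<bar> \<le> c))" for i c
    by (rule integrable_bdd[where B=1]) (auto simp: ind_def)
  have intL: "integrable M (\<lambda>\<omega>. Lsum n h \<omega>)"
    unfolding Lsum_def by (intro Bochner_Integration.integrable_sum integrable_mult_right int1)
  have "prob {\<omega>\<in>space M. Lb \<le> Lsum n h \<omega>} \<le> expectation (\<lambda>\<omega>. Lsum n h \<omega>) / Lb"
    using Lb by (intro integral_Markov_inequality_measure[where A="space M"] intL)
                (auto simp: Lsum_def intro!: sum_nonneg mult_nonneg_nonneg)
  also have "expectation (\<lambda>\<omega>. Lsum n h \<omega>) \<le> (\<Sum>i<n. (pnorm p d (X i) / sqrt n) * (4 * f0 * (h * pnorm p d (X i) / sqrt n)))"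
    unfolding Lsum_def
  proof (subst Bochner_Integration.integral_sum, simp add: int1, rule sum_mono)
    fix i assume i: "i \<in> {..<n}"
    have "expectation (\<lambda>\<omega>. ind (\<bar>eps i \<omega>\<bar> \<le> h * pnorm p d (X i) / sqrt n)) \<le> 4 * f0 * (h * pnorm p d (X i) / sqrt n)"
      by (rule exp_small) (use small i h in auto)
    then show "expectation (\<lambda>\<omega>. pnorm p d (X i) / sqrt n * ind (\<bar>eps i \<omega>\<bar> \<le> h * pnorm p d (X i) / sqrt n))
        \<le> pnorm p d (X i) / sqrt n * (4 * f0 * (h * pnorm p d (X i) / sqrt n))"
      by (simp only: Bochner_Integration.integral_mult_right_zero) (rule mult_left_mono, simp_all)
  qed
  also have "(\<Sum>i<n. (pnorm p d (X i) / sqrt n) * (4 * f0 * (h * pnorm p d (X i) / sqrt n)))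
      = 4 * f0 * h * ((\<Sum>i<n. (pnorm p d (X i))^2) / n)"
    using n by (simp add: sum_distrib_left sum_divide_distrib power2_eq_square mult_ac)
  finally show ?thesis using Lb by (simp add: divide_right_mono)
qed

end


lemma grid_exists:
  assumes s: "s > 0" and R: "R \<ge> 0"
  shows "\<exists>Gr. finite Gr \<and> card Gr \<le> (nat (2 * \<lceil>R/s\<rceil> + 1))^(p*d) \<and>
    (\<forall>v. pnorm p d v \<le> R \<longrightarrow> (\<exists>w\<in>Gr. pnorm p d (\<lambda>j k. v j k - w j k) \<le> s * sqrt (real (p*d))))"
proof -
  define K where "K = \<lceil>R/s\<rceil>"
  define emb where "emb g = (\<lambda>j k. s * real_of_int (g (j,k)))" for g :: "nat \<times> nat \<Rightarrow> int"
  define Gr where "Gr = emb ` (PiE (idx p d) (\<lambda>_. {-K..K}))"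
  have fin: "finite Gr" unfolding Gr_def by (intro finite_imageI finite_PiE) auto
  have "card Gr \<le> card (PiE (idx p d) (\<lambda>_. {-K..K}))" unfolding Gr_def by (rule card_image_le) (intro finite_PiE, auto)
  also have "\<dots> = (nat (2 * K + 1))^(p*d)"
    by (simp add: card_PiE idx_def card_cartesian_product)
  finally have cardG: "card Gr \<le> (nat (2 * \<lceil>R/s\<rceil> + 1))^(p*d)" unfolding K_def .
  have approx: "\<exists>w\<in>Gr. pnorm p d (\<lambda>j k. v j k - w j k) \<le> s * sqrt (real (p*d))" if v: "pnorm p d v \<le> R" for v
  proof -
    define g where "g = (\<lambda>a\<in>idx p d. round (uc v a / s))"
    have gK: "g \<in> PiE (idx p d) (\<lambda>_. {-K..K})"
    proof -
      have "round (uc v a / s) \<in> {-K..K}" if a: "a \<in> idx p d" for a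
      proof -
        have "\<bar>uc v a\<bar> \<le> R" using comp_le_pnorm[of "fst a" p "snd a" d v] a v by (auto simp: idx_def uc_def)
        then have "\<bar>uc v a / s\<bar> \<le> R / s" using s by (simp add: abs_divide divide_right_mono)
        also have "\<dots> \<le> of_int K" unfolding K_def by simp
        finally have "\<bar>uc v a / s\<bar> \<le> of_int K" .
        then have x: "- of_int K \<le> uc v a / s" "uc v a / s \<le> of_int K" by (simp_all only: abs_le_iff) linarith+
        have "round (uc v a / s) \<le> K" unfolding round_def using x by (simp add: floor_le_iff)
        moreover have "- K \<le> round (uc v a / s)" unfolding round_def using x by (simp add: le_floor_iff)
        ultimately show ?thesis by auto
      qed
      then show ?thesis unfolding g_def by auto
    qed
    define w where "w = emb g"
    have wG: "w \<in> Gr" unfolding w_def Gr_def using gK by auto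
    have comp: "\<bar>uc v a - uc w a\<bar> \<le> s / 2" if a: "a \<in> idx p d" for a
    proof -
      have "uc w a = s * of_int (round (uc v a / s))" using a by (simp add: w_def emb_def uc_def g_def)
      then have "\<bar>uc v a - uc w a\<bar> = s * \<bar>of_int (round (uc v a / s)) - uc v a / s\<bar>"
        using s by (simp add: abs_mult_pos' right_diff_distrib abs_minus_commute)
      also have "\<dots> \<le> s * (1/2)" using s by (intro mult_left_mono of_int_round_abs_le) auto
      finally show ?thesis by simp
    qed
    have "(pnorm p d (\<lambda>j k. v j k - w j k))^2 = (\<Sum>a\<in>idx p d. (uc v a - uc w a)^2)"
      unfolding pnorm_L2 L2_set_def by (simp add: sum_nonneg uc_def)
    also have "\<dots> \<le> (\<Sum>a\<in>idx p d. s^2)"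
    proof (rule sum_mono)
      fix a assume "a \<in> idx p d"
      then have "\<bar>uc v a - uc w a\<bar> \<le> s" using comp s by fastforce
      then have "\<bar>uc v a - uc w a\<bar>^2 \<le> s^2" by (intro power_mono) auto
      then show "(uc v a - uc w a)^2 \<le> s^2" by simp
    qed
    also have "\<dots> = (s * sqrt (real (p*d)))^2" by (simp add: idx_def card_cartesian_product power_mult_distrib)
    finally have "(pnorm p d (\<lambda>j k. v j k - w j k))^2 \<le> (s * sqrt (real (p*d)))^2" .
    then have "pnorm p d (\<lambda>j k. v j k - w j k) \<le> s * sqrt (real (p*d))"
      by (rule power2_le_imp_le) (use s in auto)
    then show ?thesis using wG by blast
  qed
  show ?thesis using fin cardG approx by blast
qed


context qr2 begin

lemma quad_upper:
  assumes n: "n > 0"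
  shows "quad (gram n X) w \<le> ((\<Sum>i<n. (pnorm p d (X i))^2) / n) * (pnorm p d w)^2"
proof -
  have "quad (gram n X) w = (\<Sum>i<n. (lin p d (X i) w / sqrt n)^2)" by (rule sum_sq_tt[OF n, symmetric])
  also have "\<dots> \<le> (\<Sum>i<n. (pnorm p d (X i) * pnorm p d w)^2 / n)"
  proof (rule sum_mono)
    fix i
    have "\<bar>lin p d (X i) w\<bar>^2 \<le> (pnorm p d (X i) * pnorm p d w)^2"
      by (rule power_mono[OF lin_CS]) simp
    then show "(lin p d (X i) w / sqrt n)^2 \<le> (pnorm p d (X i) * pnorm p d w)^2 / n"
      using n by (simp add: power_divide divide_right_mono)
  qed
  also have "\<dots> = ((\<Sum>i<n. (pnorm p d (X i))^2) / n) * (pnorm p d w)^2"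
    by (simp add: power_mult_distrib sum_divide_distrib sum_distrib_right)
  finally show ?thesis .
qed

definition "kap = f0 * c0 / 128"

lemma kap_pos: "kap > 0" using f0_pos c0(1) by (simp add: kap_def)

lemma Zv_meas[measurable]: "(\<lambda>\<omega>. pnorm p d (Zv n \<omega>)) \<in> borel_measurable M"
  unfolding pnorm_def Zv_def by measurable

lemma core:
  assumes e: "e > 0"
  shows "\<exists>C\<ge>1. \<exists>N. \<forall>n\<ge>N. \<exists>A\<in>sets M. prob A < e \<and>
           (\<forall>\<omega>\<in>space M - A. \<forall>v. pnorm p d v = C \<longrightarrow> Dv n \<omega> v > kap * C^2 / 4)"
proof -
  define Zb where "Zb = sqrt (4*Tb/e)"
  define L1 where "L1 = 32*f0*Tb/e"
  define r where "r = sqrt (real (p*d))"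
  define \<sigma> where "\<sigma> = min (1/(2*r)) (kap/(4*r*(Zb+L1)))"
  define Nc where "Nc = (nat (2*\<lceil>1/\<sigma>\<rceil> + 1))^(p*d)"
  define C where "C = max 1 (sqrt (256*Nc*Tb/(kap^2*e)))"
  have Zb0: "Zb > 0" unfolding Zb_def using Tb_pos e by simp
  have Zb2: "Zb^2 = 4*Tb/e" unfolding Zb_def using Tb_pos e by simp
  have L10: "L1 > 0" unfolding L1_def using Tb_pos e f0_pos by simp
  have "1 \<le> p*d" using pd by (metis mult_le_mono nat_mult_1)
  then have "(1::real) \<le> real (p*d)" by linarith
  then have r1: "r \<ge> 1" unfolding r_def by simp
  have \<sigma>0: "\<sigma> > 0" unfolding \<sigma>_def using r1 kap_pos Zb0 L10 by simp
  have \<sigma>1: "\<sigma> * r \<le> 1/2"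
  proof -
    have "\<sigma> \<le> 1/(2*r)" unfolding \<sigma>_def by simp
    then have "\<sigma> * r \<le> 1/(2*r) * r" by (rule mult_right_mono) (use r1 in auto)
    also have "\<dots> = 1/2" using r1 by simp
    finally show ?thesis .
  qed
  have \<sigma>2: "\<sigma> * r * (Zb + L1) \<le> kap/4"
  proof -
    have "\<sigma> \<le> kap/(4*r*(Zb+L1))" unfolding \<sigma>_def by simp
    then have "\<sigma> * (r * (Zb + L1)) \<le> kap/(4*r*(Zb+L1)) * (r * (Zb + L1))"
      by (rule mult_right_mono) (use r1 Zb0 L10 in auto)
    also have "\<dots> = kap/4"
    proof -
      define Q where "Q = r * (Zb + L1)"
      have Q: "Q \<noteq> 0" unfolding Q_def using r1 Zb0 L10 by simp
      have "4*r*(Zb+L1) = 4 * Q" unfolding Q_def by simp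
      then show ?thesis using Q unfolding Q_def[symmetric] by simp
    qed
    finally show ?thesis by (simp add: mult_ac)
  qed
  have C1: "C \<ge> 1" unfolding C_def by simp
  have C0: "C > 0" using C1 by simp
  have Nc0: "Nc \<ge> 0" by simp
  have CN: "real Nc * (64 * Tb / (kap^2 * C^2)) \<le> e/4"
  proof -
    have nn: "0 \<le> 256 * real Nc * Tb / (kap^2 * e)" using Tb_pos kap_pos e
      by (intro divide_nonneg_nonneg mult_nonneg_nonneg) auto
    have "sqrt (256*Nc*Tb/(kap^2*e)) \<le> C" unfolding C_def by simp
    then have "(sqrt (256*Nc*Tb/(kap^2*e)))^2 \<le> C^2" by (rule power_mono) (use nn in simp)
    then have "256*Nc*Tb/(kap^2*e) \<le> C^2" using real_sqrt_pow2[OF nn] by simp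
    then have "256*Nc*Tb \<le> C^2 * (kap^2*e)" using kap_pos e by (simp add: divide_le_eq)
    moreover have pos: "kap^2*C^2 > 0" using kap_pos C0 by simp
    moreover have "real Nc * (64 * Tb / (kap^2 * C^2)) = (64*Nc*Tb)/(kap^2*C^2)" by simp
    moreover have "e/4*(kap^2*C^2) = (C^2*(kap^2*e))/4" by simp
    ultimately show ?thesis by (simp add: pos_divide_le_eq mult_ac)
  qed
  obtain Gr where Gr: "finite Gr" "card Gr \<le> (nat (2 * \<lceil>C/(C*\<sigma>)\<rceil> + 1))^(p*d)"
    "\<And>v. pnorm p d v \<le> C \<Longrightarrow> \<exists>w\<in>Gr. pnorm p d (\<lambda>j k. v j k - w j k) \<le> (C*\<sigma>) * r"
    using grid_exists[of "C*\<sigma>" C p d] C0 \<sigma>0 unfolding r_def by auto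
  have cardGr: "card Gr \<le> Nc" using Gr(2) C0 unfolding Nc_def by simp
  define Gr' where "Gr' = {w\<in>Gr. C/2 \<le> pnorm p d w \<and> pnorm p d w \<le> 2*C}"
  have finGr': "finite Gr'" using Gr(1) unfolding Gr'_def by simp
  have cardGr': "card Gr' \<le> Nc" using cardGr card_mono[OF Gr(1), of Gr'] unfolding Gr'_def by auto
  define \<eta> where "\<eta> = \<delta>1 / (4*C)"
  have \<eta>0: "\<eta> > 0" unfolding \<eta>_def using delta1(1) C0 by simp
  have ev: "eventually (\<lambda>n. n > 0 \<and> (\<forall>v. quad (gram n X) v \<ge> (c0/2) * (pnorm p d v)^2) \<and>
      (\<Sum>i<n. (pnorm p d (X i))^2) / n \<le> Tb \<and> (\<forall>i<n. pnorm p d (X i) / sqrt n \<le> \<eta>)) sequentially"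
    using eventually_gt_at_top[of 0] ev_quad ev_trace ev_maxX[OF \<eta>0] by eventually_elim auto
  then obtain N where N: "\<And>n. n \<ge> N \<Longrightarrow> n > 0 \<and> (\<forall>v. quad (gram n X) v \<ge> (c0/2) * (pnorm p d v)^2) \<and>
      (\<Sum>i<n. (pnorm p d (X i))^2) / n \<le> Tb \<and> (\<forall>i<n. pnorm p d (X i) / sqrt n \<le> \<eta>)"
    unfolding eventually_sequentially by blast
  show ?thesis
  proof (intro exI[of _ C] conjI C1 exI[of _ N] allI impI)
    fix n assume "n \<ge> N"
    note Nn = N[OF this]
    have n0: "n > 0" and qn: "\<And>v. quad (gram n X) v \<ge> (c0/2) * (pnorm p d v)^2"
      and Tn: "(\<Sum>i<n. (pnorm p d (X i))^2) / n \<le> Tb"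
      and Xn: "\<And>i. i < n \<Longrightarrow> pnorm p d (X i) / sqrt n \<le> \<eta>" using Nn by auto
    define T where "T = (\<Sum>i<n. (pnorm p d (X i))^2) / n"
    have T0: "T \<ge> 0" unfolding T_def by (simp add: sum_nonneg)
    define Bw where "Bw w = {\<omega>\<in>space M. kap*C^2/2 \<le> \<bar>Dv n \<omega> w - expectation (\<lambda>\<omega>. Dv n \<omega> w)\<bar>}" for w
    define AZ where "AZ = {\<omega>\<in>space M. Zb^2 \<le> (pnorm p d (Zv n \<omega>))^2}"
    define AL where "AL = {\<omega>\<in>space M. C*L1 \<le> Lsum n (2*C) \<omega>}"
    define A where "A = (\<Union>w\<in>Gr'. Bw w) \<union> AZ \<union> AL"
    have Bw_sets: "Bw w \<in> sets M" for w unfolding Bw_def by measurable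
    have AZ_sets: "AZ \<in> sets M" unfolding AZ_def by measurable
    have AL_sets: "AL \<in> sets M" unfolding AL_def by measurable
    have "(\<Union>w\<in>Gr'. Bw w) \<in> sets M" using Bw_sets finGr' by (intro sets.finite_UN) auto
    then have A_sets: "A \<in> sets M" unfolding A_def using AZ_sets AL_sets by auto
    have tt_small: "\<bar>tt n w i\<bar> < \<delta>1" if "pnorm p d w \<le> 2*C" "i < n" for w i
    proof -
      have "\<bar>tt n w i\<bar> \<le> pnorm p d (X i) * pnorm p d w / sqrt n" by (rule tt_bound)
      also have "\<dots> = (pnorm p d (X i) / sqrt n) * pnorm p d w" by simp
      also have "\<dots> \<le> \<eta> * (2*C)" using that Xn[of i] \<eta>0 by (intro mult_mono) auto
      also have "\<dots> < \<delta>1" unfolding \<eta>_def using C0 delta1(1) by simp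
      finally show ?thesis .
    qed
    have pBw: "prob (Bw w) \<le> 64 * Tb / (kap^2 * C^2)" if w: "w \<in> Gr'" for w
    proof -
      have pw: "pnorm p d w \<le> 2*C" using w unfolding Gr'_def by auto
      have a0: "kap*C^2/2 > 0" using kap_pos C0 by simp
      have "prob (Bw w) \<le> 4 * quad (gram n X) w / (kap*C^2/2)^2"
        unfolding Bw_def by (rule Dv_dev[OF n0 a0])
      also have "quad (gram n X) w \<le> Tb * (2*C)^2"
      proof -
        have "quad (gram n X) w \<le> T * (pnorm p d w)^2" unfolding T_def by (rule quad_upper[OF n0])
        also have "\<dots> \<le> Tb * (2*C)^2"
          using Tn pw T0 unfolding T_def[symmetric] by (intro mult_mono power_mono) auto
        finally show ?thesis .
      qed
      then have "4 * quad (gram n X) w / (kap*C^2/2)^2 \<le> 4 * (Tb * (2*C)^2) / (kap*C^2/2)^2"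
        by (intro divide_right_mono) auto
      also have "\<dots> = 64 * Tb / (kap^2 * C^2)"
      proof -
        define D where "D = C^2"
        have D0: "D > 0" unfolding D_def using C0 by simp
        have "4 * (Tb * (2*C)^2) / (kap*C^2/2)^2 = 64 * Tb * D / (kap^2 * D * D)"
          unfolding D_def by (simp add: power_mult_distrib power_divide power2_eq_square)
        also have "\<dots> = 64 * Tb / (kap^2 * D)" using D0 by simp
        finally show ?thesis unfolding D_def .
      qed
      finally show ?thesis .
    qed
    have "prob A \<le> prob (\<Union>w\<in>Gr'. Bw w) + prob AZ + prob AL"
    proof -
      have U_sets: "(\<Union>w\<in>Gr'. Bw w) \<in> sets M" using Bw_sets finGr' by (intro sets.finite_UN) auto
      have 1: "prob A \<le> prob ((\<Union>w\<in>Gr'. Bw w) \<union> AZ) + prob AL"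
        unfolding A_def by (rule measure_Un_le) (use U_sets AZ_sets AL_sets in auto)
      have 2: "prob ((\<Union>w\<in>Gr'. Bw w) \<union> AZ) \<le> prob (\<Union>w\<in>Gr'. Bw w) + prob AZ"
        by (rule measure_Un_le[OF U_sets AZ_sets])
      show ?thesis using 1 2 by linarith
    qed
    also have "prob (\<Union>w\<in>Gr'. Bw w) \<le> e/4"
    proof -
      have "prob (\<Union>w\<in>Gr'. Bw w) \<le> (\<Sum>w\<in>Gr'. prob (Bw w))" by (rule measure_UNION_le[OF finGr' Bw_sets])
      also have "\<dots> \<le> (\<Sum>w\<in>Gr'. 64 * Tb / (kap^2 * C^2))" by (intro sum_mono pBw)
      also have "\<dots> = real (card Gr') * (64 * Tb / (kap^2 * C^2))" by simp
      also have "\<dots> \<le> real Nc * (64 * Tb / (kap^2 * C^2))"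
        using cardGr' Tb_pos kap_pos C0 by (intro mult_right_mono) auto
      finally show ?thesis using CN by simp
    qed
    also have "prob AZ \<le> e/4"
    proof -
      have "prob AZ \<le> T / Zb^2" unfolding AZ_def T_def by (rule Zv_prob[OF n0 Zb0])
      also have "\<dots> \<le> Tb / Zb^2" using Tn Zb0 unfolding T_def[symmetric] by (simp add: divide_right_mono)
      also have "\<dots> = e/4" unfolding Zb2 using Tb_pos e by simp
      finally show ?thesis .
    qed
    also have "prob AL \<le> e/4"
    proof -
      have small: "\<forall>i<n. 2*C * pnorm p d (X i) / sqrt n < \<delta>1"
      proof (intro allI impI)
        fix i assume "i < n"
        then have "2*C * (pnorm p d (X i) / sqrt n) \<le> 2*C * \<eta>" using Xn C0 by (intro mult_left_mono) auto
        also have "\<dots> < \<delta>1" unfolding \<eta>_def using C0 delta1(1) by simp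
        finally show "2*C * pnorm p d (X i) / sqrt n < \<delta>1" by simp
      qed
      have "prob AL \<le> (4 * f0 * (2*C) * T) / (C*L1)" unfolding AL_def T_def
        by (rule L_prob[OF n0 _ _ small]) (use C0 L10 in auto)
      also have "\<dots> \<le> (4 * f0 * (2*C) * Tb) / (C*L1)"
        using Tn C0 L10 f0_pos unfolding T_def[symmetric] by (intro divide_right_mono mult_left_mono) auto
      also have "\<dots> = e/4"
      proof -
        have "(4 * f0 * (2*C) * Tb) / (C*L1) = (8 * f0 * Tb * C) / (32*f0*Tb/e * C)" unfolding L1_def by (simp add: mult_ac)
        also have "\<dots> = (8 * f0 * Tb) / (32*f0*Tb/e)" using C0 by simp
        also have "\<dots> = e/4" using f0_pos Tb_pos e by simp
        finally show ?thesis .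
      qed
      finally show ?thesis .
    qed
    finally have pA: "prob A < e" using e by simp
    have good: "Dv n \<omega> v > kap * C^2 / 4" if \<omega>: "\<omega> \<in> space M - A" and v: "pnorm p d v = C" for \<omega> v
    proof -
      obtain w where w: "w \<in> Gr" and vw: "pnorm p d (\<lambda>j k. v j k - w j k) \<le> (C*\<sigma>) * r"
        using Gr(3)[of v] v by auto
      have vw2: "pnorm p d (\<lambda>j k. v j k - w j k) \<le> C/2"
      proof -
        have "C*\<sigma>*r = C*(\<sigma>*r)" by simp
        also have "\<dots> \<le> C*(1/2)" using \<sigma>1 C0 by (intro mult_left_mono) auto
        finally show ?thesis using vw by simp
      qed
      have "pnorm p d w \<le> pnorm p d v + pnorm p d (\<lambda>j k. w j k - v j k)"
        by (rule pnorm_ge_pnorm_diff)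
      then have pw1: "pnorm p d w \<le> 2*C" using vw2 v pnorm_minus[of p d v w] C0 by linarith
      have "pnorm p d v \<le> pnorm p d w + pnorm p d (\<lambda>j k. v j k - w j k)"
        by (rule pnorm_ge_pnorm_diff)
      then have pw2: "pnorm p d w \<ge> C/2" using vw2 v by simp
      have wG': "w \<in> Gr'" unfolding Gr'_def using w pw1 pw2 by simp
      have nB: "\<omega> \<notin> Bw w" using \<omega> wG' unfolding A_def by auto
      then have dev: "\<bar>Dv n \<omega> w - expectation (\<lambda>\<omega>. Dv n \<omega> w)\<bar> < kap*C^2/2"
        using \<omega> unfolding Bw_def by auto
      have c2: "(c0/2) * (pnorm p d w)^2 \<ge> (c0/2) * (C/2)^2"
        using pw2 C0 c0(1) by (intro mult_left_mono power_mono) auto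
      have "expectation (\<lambda>\<omega>. Dv n \<omega> w) \<ge> (f0/16) * quad (gram n X) w"
        by (rule E_Dv_low[OF n0]) (use tt_small pw1 in auto)
      also have "(f0/16) * quad (gram n X) w \<ge> (f0/16) * ((c0/2) * (pnorm p d w)^2)"
        using qn[of w] f0_pos by (intro mult_left_mono) auto
      also have "(f0/16) * ((c0/2) * (pnorm p d w)^2) \<ge> (f0/16) * ((c0/2) * (C/2)^2)"
        by (rule mult_left_mono) (use c2 f0_pos in auto)
      finally have Ew0: "expectation (\<lambda>\<omega>. Dv n \<omega> w) \<ge> (f0/16) * ((c0/2) * (C/2)^2)" .
      have "(f0/16) * ((c0/2) * (C/2)^2) = kap * C^2" unfolding kap_def by (simp add: power_divide)
      then have Ew: "expectation (\<lambda>\<omega>. Dv n \<omega> w) \<ge> kap * C^2" using Ew0 by linarith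
      have Dw: "Dv n \<omega> w > kap * C^2 / 2"
      proof -
        have "kap*C^2 = 2 * (kap*C^2/2)" by simp
        then show ?thesis using dev Ew unfolding abs_less_iff by linarith
      qed
      have nZ: "\<omega> \<notin> AZ" and nL: "\<omega> \<notin> AL" using \<omega> unfolding A_def by auto
      have Zs: "pnorm p d (Zv n \<omega>) < Zb"
      proof -
        have "(pnorm p d (Zv n \<omega>))^2 < Zb^2" using nZ \<omega> unfolding AZ_def by auto
        then show ?thesis by (rule power_less_imp_less_base) (use Zb0 in simp)
      qed
      have Ls: "Lsum n (2*C) \<omega> < C*L1" using nL \<omega> unfolding AL_def by auto
      have "\<bar>Dv n \<omega> v - Dv n \<omega> w\<bar> \<le> pnorm p d (\<lambda>j k. v j k - w j k) * (pnorm p d (Zv n \<omega>) + Lsum n (2*C) \<omega>)"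
        by (rule Dv_lip) (use v pw1 C0 in simp_all)
      also have "\<dots> \<le> ((C*\<sigma>) * r) * (Zb + C*L1)"
      proof (rule mult_mono[OF vw])
        show "pnorm p d (Zv n \<omega>) + Lsum n (2 * C) \<omega> \<le> Zb + C * L1" using Zs Ls by simp
        show "0 \<le> C * \<sigma> * r" using C0 \<sigma>0 r1 by simp
        show "0 \<le> pnorm p d (Zv n \<omega>) + Lsum n (2 * C) \<omega>"
          unfolding Lsum_def by (intro add_nonneg_nonneg pnorm_nonneg sum_nonneg mult_nonneg_nonneg divide_nonneg_nonneg) auto
      qed
      also have "\<dots> \<le> ((C*\<sigma>) * r) * (C * (Zb + L1))"
      proof (rule mult_left_mono)
        have "1 * Zb \<le> C * Zb" using C1 Zb0 by (intro mult_right_mono) auto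
        then show "Zb + C * L1 \<le> C * (Zb + L1)" by (simp add: distrib_left)
        show "0 \<le> C * \<sigma> * r" using C0 \<sigma>0 r1 by simp
      qed
      also have "\<dots> = C^2 * (\<sigma> * r * (Zb + L1))" unfolding power2_eq_square by algebra
      also have "\<dots> \<le> C^2 * (kap/4)" by (rule mult_left_mono[OF \<sigma>2]) simp
      finally have "\<bar>Dv n \<omega> v - Dv n \<omega> w\<bar> \<le> C^2 * (kap/4)" .
      moreover have "C^2 * (kap/4) = kap*C^2/4" by simp
      moreover have "kap*C^2/2 = 2*(kap*C^2/4)" by simp
      ultimately show ?thesis using Dw unfolding abs_le_iff by linarith
    qed
    show "\<exists>A\<in>sets M. prob A < e \<and> (\<forall>\<omega>\<in>space M - A. \<forall>v. pnorm p d v = C \<longrightarrow> kap * C^2 / 4 < Dv n \<omega> v)"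
      using A_sets pA good by blast
  qed
qed

end


lemma Gn_convex:
  assumes "0 \<le> l" "l \<le> 1" "0 < \<tau>" "\<tau> < 1"
  shows "Gn \<tau> p d X Y n (\<lambda>j k. (1-l) * a j k + l * b j k) \<le> (1-l) * Gn \<tau> p d X Y n a + l * Gn \<tau> p d X Y n b"
proof -
  have e: "Y i - lin p d (X i) (\<lambda>j k. (1-l) * a j k + l * b j k) = (1-l) * (Y i - lin p d (X i) a) + l * (Y i - lin p d (X i) b)" for i
  proof -
    have "lin p d (X i) (\<lambda>j k. (1-l) * a j k + l * b j k) = (1-l) * lin p d (X i) a + l * lin p d (X i) b"
      using lin_add[of p d "X i" "\<lambda>j k. (1-l) * a j k" "\<lambda>j k. l * b j k"] lin_scale[of p d "X i" "1-l" a] lin_scale[of p d "X i" l b]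
      by simp
    then show ?thesis by (simp add: algebra_simps)
  qed
  have "Gn \<tau> p d X Y n (\<lambda>j k. (1-l) * a j k + l * b j k) \<le> (\<Sum>i<n. (1-l) * check_fun \<tau> (Y i - lin p d (X i) a) + l * check_fun \<tau> (Y i - lin p d (X i) b))"
    unfolding Gn_def e by (intro sum_mono check_convex) (use assms in auto)
  also have "\<dots> = (1-l) * Gn \<tau> p d X Y n a + l * Gn \<tau> p d X Y n b"
    unfolding Gn_def by (simp add: sum.distrib sum_distrib_left)
  finally show ?thesis .
qed

lemma Qn_convex:
  assumes "0 \<le> l" "l \<le> 1" "0 < \<tau>" "\<tau> < 1" "m1 \<ge> 0" "m2 \<ge> 0"
  shows "Qn \<tau> \<gamma> p d X Y n m1 m2 bt (\<lambda>j k. (1-l) * a j k + l * b j k)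
    \<le> (1-l) * Qn \<tau> \<gamma> p d X Y n m1 m2 bt a + l * Qn \<tau> \<gamma> p d X Y n m1 m2 bt b"
proof -
  define w1 where "w1 j = gnorm d (bt j) powr (-\<gamma>)" for j
  define w2 where "w2 j = gnorm d (\<lambda>k. bt j k - bt (j-1) k) powr (-\<gamma>)" for j
  have P1: "(\<Sum>j<p. w1 j * gnorm d (\<lambda>k. (1-l) * a j k + l * b j k))
      \<le> (1-l) * (\<Sum>j<p. w1 j * gnorm d (a j)) + l * (\<Sum>j<p. w1 j * gnorm d (b j))"
  proof -
    have "(\<Sum>j<p. w1 j * gnorm d (\<lambda>k. (1-l) * a j k + l * b j k)) \<le> (\<Sum>j<p. w1 j * ((1-l) * gnorm d (a j) + l * gnorm d (b j)))"
      by (intro sum_mono mult_left_mono gnorm_convex) (use assms in \<open>auto simp: w1_def\<close>)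
    also have "\<dots> = (1-l) * (\<Sum>j<p. w1 j * gnorm d (a j)) + l * (\<Sum>j<p. w1 j * gnorm d (b j))"
      by (simp add: sum.distrib sum_distrib_left mult.left_commute distrib_left)
    finally show ?thesis .
  qed
  have P2: "(\<Sum>j\<in>{1..<p}. w2 j * gnorm d (\<lambda>k. ((1-l) * a j k + l * b j k) - ((1-l) * a (j-1) k + l * b (j-1) k)))
      \<le> (1-l) * (\<Sum>j\<in>{1..<p}. w2 j * gnorm d (\<lambda>k. a j k - a (j-1) k)) + l * (\<Sum>j\<in>{1..<p}. w2 j * gnorm d (\<lambda>k. b j k - b (j-1) k))"
  proof -
    have eq: "(\<lambda>k. ((1-l) * a j k + l * b j k) - ((1-l) * a (j-1) k + l * b (j-1) k))
        = (\<lambda>k. (1-l) * (a j k - a (j-1) k) + l * (b j k - b (j-1) k))" for j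
      by (simp add: algebra_simps)
    have "(\<Sum>j\<in>{1..<p}. w2 j * gnorm d (\<lambda>k. ((1-l) * a j k + l * b j k) - ((1-l) * a (j-1) k + l * b (j-1) k)))
        \<le> (\<Sum>j\<in>{1..<p}. w2 j * ((1-l) * gnorm d (\<lambda>k. a j k - a (j-1) k) + l * gnorm d (\<lambda>k. b j k - b (j-1) k)))"
      unfolding eq by (intro sum_mono mult_left_mono gnorm_convex) (use assms in \<open>auto simp: w2_def\<close>)
    also have "\<dots> = (1-l) * (\<Sum>j\<in>{1..<p}. w2 j * gnorm d (\<lambda>k. a j k - a (j-1) k)) + l * (\<Sum>j\<in>{1..<p}. w2 j * gnorm d (\<lambda>k. b j k - b (j-1) k))"
      by (simp add: sum.distrib sum_distrib_left mult.left_commute distrib_left)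
    finally show ?thesis .
  qed
  have G: "Gn \<tau> p d X Y n (\<lambda>j k. (1-l) * a j k + l * b j k) \<le> (1-l) * Gn \<tau> p d X Y n a + l * Gn \<tau> p d X Y n b"
    by (rule Gn_convex) (use assms in auto)
  have "m1 * (\<Sum>j<p. w1 j * gnorm d (\<lambda>k. (1-l) * a j k + l * b j k))
      \<le> m1 * ((1-l) * (\<Sum>j<p. w1 j * gnorm d (a j)) + l * (\<Sum>j<p. w1 j * gnorm d (b j)))"
    by (rule mult_left_mono[OF P1 assms(5)])
  moreover have "m2 * (\<Sum>j\<in>{1..<p}. w2 j * gnorm d (\<lambda>k. ((1-l) * a j k + l * b j k) - ((1-l) * a (j-1) k + l * b (j-1) k)))
      \<le> m2 * ((1-l) * (\<Sum>j\<in>{1..<p}. w2 j * gnorm d (\<lambda>k. a j k - a (j-1) k)) + l * (\<Sum>j\<in>{1..<p}. w2 j * gnorm d (\<lambda>k. b j k - b (j-1) k)))"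
    by (rule mult_left_mono[OF P2 assms(6)])
  ultimately show ?thesis using G unfolding Qn_def w1_def[symmetric] w2_def[symmetric]
    by (simp add: algebra_simps)
qed

lemma gnorm_rev: "gnorm d a - gnorm d (\<lambda>k. a k + x k) \<le> gnorm d x"
proof -
  have "gnorm d a \<le> gnorm d (\<lambda>k. a k + x k) + gnorm d (\<lambda>k. (-1) * x k)"
    using gnorm_triangle[of d "\<lambda>k. a k + x k" "\<lambda>k. (-1) * x k"] by simp
  moreover have "gnorm d (\<lambda>k. - x k) = gnorm d x" by (simp add: gnorm_def)
  ultimately show ?thesis by simp
qed


lemma gnorm_sub_tri: "gnorm d (\<lambda>k. x k - y k) \<le> gnorm d x + gnorm d y"
proof -
  have "gnorm d (\<lambda>k. x k + (-1) * y k) \<le> gnorm d x + gnorm d (\<lambda>k. (-1) * y k)" by (rule gnorm_triangle)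
  moreover have "gnorm d (\<lambda>k. - y k) = gnorm d y" by (simp add: gnorm_def)
  ultimately show ?thesis by (simp add: gnorm_scale)
qed

lemma gnorm_sym: "gnorm d (\<lambda>k. x k - y k) = gnorm d (\<lambda>k. y k - x k)"
  by (simp add: gnorm_def power2_commute)

lemma term_bound:
  assumes g: "\<gamma> > 0"
    and close: "gnorm d a \<noteq> 0 \<Longrightarrow> gnorm d (\<lambda>k. c k - a k) \<le> gnorm d a / 2"
    and S: "gnorm d y \<le> S"
  shows "gnorm d c powr (-\<gamma>) * (gnorm d a - gnorm d (\<lambda>k. a k + y k))
      \<le> (if gnorm d a = 0 then 0 else (gnorm d a / 2) powr (-\<gamma>)) * S"
proof (cases "gnorm d a = 0")
  case True
  have "gnorm d c powr (-\<gamma>) * (gnorm d a - gnorm d (\<lambda>k. a k + y k)) \<le> 0"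
    using True by (intro mult_nonneg_nonpos) auto
  then show ?thesis using True by simp
next
  case False
  then have ga: "gnorm d a > 0" using gnorm_nonneg[of d a] by linarith
  have "gnorm d a \<le> gnorm d c + gnorm d (\<lambda>k. a k - c k)"
    using gnorm_triangle[of d c "\<lambda>k. a k - c k"] by simp
  then have gc: "gnorm d c \<ge> gnorm d a / 2" using close[OF False] gnorm_sym[of d a c] by linarith
  have w: "gnorm d c powr (-\<gamma>) \<le> (gnorm d a / 2) powr (-\<gamma>)"
    by (rule powr_mono2') (use g ga gc in auto)
  have diff: "gnorm d a - gnorm d (\<lambda>k. a k + y k) \<le> S" using gnorm_rev[of d a y] S by linarith
  have S0: "S \<ge> 0" using S gnorm_nonneg[of d y] by linarith
  have "gnorm d c powr (-\<gamma>) * (gnorm d a - gnorm d (\<lambda>k. a k + y k)) \<le> gnorm d c powr (-\<gamma>) * S"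
    by (rule mult_left_mono[OF diff]) simp
  also have "\<dots> \<le> (gnorm d a / 2) powr (-\<gamma>) * S" by (rule mult_right_mono[OF w S0])
  finally show ?thesis using False by simp
qed

definition Wc :: "real \<Rightarrow> nat \<Rightarrow> nat \<Rightarrow> (nat \<Rightarrow> nat \<Rightarrow> real) \<Rightarrow> real" where
  "Wc \<gamma> p d b = (\<Sum>j<p. (if gnorm d (b j) = 0 then 0 else (gnorm d (b j) / 2) powr (-\<gamma>)))
     + (\<Sum>j\<in>{1..<p}. (if gnorm d (\<lambda>k. b j k - b (j-1) k) = 0 then 0 else (gnorm d (\<lambda>k. b j k - b (j-1) k) / 2) powr (-\<gamma>)))"

lemma Wc_nonneg: "Wc \<gamma> p d b \<ge> 0"
  unfolding Wc_def by (intro add_nonneg_nonneg sum_nonneg) auto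

lemma pen_diff:
  assumes g: "\<gamma> > 0" and m: "m1 \<ge> 0" "m2 \<ge> 0" and R: "pnorm p d x \<le> R"
    and close: "pnorm p d (\<lambda>j k. bt j k - b0 j k) \<le> \<rho>"
    and \<rho>1: "\<And>j. j < p \<Longrightarrow> gnorm d (b0 j) \<noteq> 0 \<Longrightarrow> \<rho> \<le> gnorm d (b0 j) / 4"
    and \<rho>2: "\<And>j. j < p \<Longrightarrow> 1 \<le> j \<Longrightarrow> gnorm d (\<lambda>k. b0 j k - b0 (j-1) k) \<noteq> 0 \<Longrightarrow> \<rho> \<le> gnorm d (\<lambda>k. b0 j k - b0 (j-1) k) / 4"
  shows "Qn \<tau> \<gamma> p d X Y n m1 m2 bt b0 - Qn \<tau> \<gamma> p d X Y n m1 m2 bt (\<lambda>j k. b0 j k + x j k)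
     \<le> Gn \<tau> p d X Y n b0 - Gn \<tau> p d X Y n (\<lambda>j k. b0 j k + x j k) + (m1 + m2) * Wc \<gamma> p d b0 * (2 * R)"
proof -
  have R0: "R \<ge> 0" using R pnorm_nonneg[of p d x] by linarith
  have \<rho>0: "\<rho> \<ge> 0" using close pnorm_nonneg[of p d "\<lambda>j k. bt j k - b0 j k"] by linarith
  define W1 where "W1 = (\<Sum>j<p. (if gnorm d (b0 j) = 0 then 0 else (gnorm d (b0 j) / 2) powr (-\<gamma>)))"
  define W2 where "W2 = (\<Sum>j\<in>{1..<p}. (if gnorm d (\<lambda>k. b0 j k - b0 (j-1) k) = 0 then 0 else (gnorm d (\<lambda>k. b0 j k - b0 (j-1) k) / 2) powr (-\<gamma>)))"
  have W1n: "W1 \<ge> 0" unfolding W1_def by (intro sum_nonneg) auto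
  have W2n: "W2 \<ge> 0" unfolding W2_def by (intro sum_nonneg) auto
  have gjb: "gnorm d (\<lambda>k. bt j k - b0 j k) \<le> \<rho>" if "j < p" for j
    using gnorm_le_pnorm[OF that, of d "\<lambda>j k. bt j k - b0 j k"] close by simp
  have T1: "(\<Sum>j<p. gnorm d (bt j) powr (-\<gamma>) * gnorm d (b0 j)) - (\<Sum>j<p. gnorm d (bt j) powr (-\<gamma>) * gnorm d (\<lambda>k. b0 j k + x j k))
      \<le> W1 * R"
  proof -
    have "(\<Sum>j<p. gnorm d (bt j) powr (-\<gamma>) * gnorm d (b0 j)) - (\<Sum>j<p. gnorm d (bt j) powr (-\<gamma>) * gnorm d (\<lambda>k. b0 j k + x j k))
        = (\<Sum>j<p. gnorm d (bt j) powr (-\<gamma>) * (gnorm d (b0 j) - gnorm d (\<lambda>k. b0 j k + x j k)))"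
      by (simp add: sum_subtractf right_diff_distrib)
    also have "\<dots> \<le> (\<Sum>j<p. (if gnorm d (b0 j) = 0 then 0 else (gnorm d (b0 j) / 2) powr (-\<gamma>)) * R)"
    proof (rule sum_mono)
      fix j assume j: "j \<in> {..<p}"
      show "gnorm d (bt j) powr (-\<gamma>) * (gnorm d (b0 j) - gnorm d (\<lambda>k. b0 j k + x j k))
          \<le> (if gnorm d (b0 j) = 0 then 0 else (gnorm d (b0 j) / 2) powr (-\<gamma>)) * R"
      proof (rule term_bound[OF g])
        assume "gnorm d (b0 j) \<noteq> 0"
        then show "gnorm d (\<lambda>k. bt j k - b0 j k) \<le> gnorm d (b0 j) / 2"
          using gjb[of j] \<rho>1[of j] j \<rho>0 by auto
      next
        show "gnorm d (x j) \<le> R" using gnorm_le_pnorm[of j p d x] j R by auto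
      qed
    qed
    also have "\<dots> = W1 * R" unfolding W1_def by (simp add: sum_distrib_right)
    finally show ?thesis .
  qed
  have T2: "(\<Sum>j\<in>{1..<p}. gnorm d (\<lambda>k. bt j k - bt (j-1) k) powr (-\<gamma>) * gnorm d (\<lambda>k. b0 j k - b0 (j-1) k))
      - (\<Sum>j\<in>{1..<p}. gnorm d (\<lambda>k. bt j k - bt (j-1) k) powr (-\<gamma>) * gnorm d (\<lambda>k. (b0 j k + x j k) - (b0 (j-1) k + x (j-1) k)))
      \<le> W2 * (2*R)"
  proof -
    have "(\<Sum>j\<in>{1..<p}. gnorm d (\<lambda>k. bt j k - bt (j-1) k) powr (-\<gamma>) * gnorm d (\<lambda>k. b0 j k - b0 (j-1) k))
      - (\<Sum>j\<in>{1..<p}. gnorm d (\<lambda>k. bt j k - bt (j-1) k) powr (-\<gamma>) * gnorm d (\<lambda>k. (b0 j k + x j k) - (b0 (j-1) k + x (j-1) k)))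
      = (\<Sum>j\<in>{1..<p}. gnorm d (\<lambda>k. bt j k - bt (j-1) k) powr (-\<gamma>) * (gnorm d (\<lambda>k. b0 j k - b0 (j-1) k)
           - gnorm d (\<lambda>k. (b0 j k - b0 (j-1) k) + (x j k - x (j-1) k))))"
      by (simp add: sum_subtractf right_diff_distrib algebra_simps)
    also have "\<dots> \<le> (\<Sum>j\<in>{1..<p}. (if gnorm d (\<lambda>k. b0 j k - b0 (j-1) k) = 0 then 0 else (gnorm d (\<lambda>k. b0 j k - b0 (j-1) k) / 2) powr (-\<gamma>)) * (2*R))"
    proof (rule sum_mono)
      fix j assume j: "j \<in> {1..<p}"
      show "gnorm d (\<lambda>k. bt j k - bt (j-1) k) powr (-\<gamma>) * (gnorm d (\<lambda>k. b0 j k - b0 (j-1) k)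
           - gnorm d (\<lambda>k. (b0 j k - b0 (j-1) k) + (x j k - x (j-1) k)))
          \<le> (if gnorm d (\<lambda>k. b0 j k - b0 (j-1) k) = 0 then 0 else (gnorm d (\<lambda>k. b0 j k - b0 (j-1) k) / 2) powr (-\<gamma>)) * (2*R)"
      proof (rule term_bound[OF g])
        assume nz: "gnorm d (\<lambda>k. b0 j k - b0 (j-1) k) \<noteq> 0"
        have "gnorm d (\<lambda>k. (bt j k - bt (j-1) k) - (b0 j k - b0 (j-1) k))
            = gnorm d (\<lambda>k. (bt j k - b0 j k) - (bt (j-1) k - b0 (j-1) k))" by (simp add: algebra_simps)
        also have "\<dots> \<le> gnorm d (\<lambda>k. bt j k - b0 j k) + gnorm d (\<lambda>k. bt (j-1) k - b0 (j-1) k)"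
          by (rule gnorm_sub_tri)
        also have "\<dots> \<le> \<rho> + \<rho>" using gjb[of j] gjb[of "j-1"] j by (intro add_mono) auto
        also have "\<dots> \<le> gnorm d (\<lambda>k. b0 j k - b0 (j-1) k) / 2" using \<rho>2[of j] j nz by auto
        finally show "gnorm d (\<lambda>k. (bt j k - bt (j-1) k) - (b0 j k - b0 (j-1) k)) \<le> gnorm d (\<lambda>k. b0 j k - b0 (j-1) k) / 2" .
      next
        have jm: "j - 1 < p" using j by auto
        have "gnorm d (\<lambda>k. x j k - x (j-1) k) \<le> gnorm d (x j) + gnorm d (x (j-1))" by (rule gnorm_sub_tri)
        also have "\<dots> \<le> R + R" using gnorm_le_pnorm[of j p d x] gnorm_le_pnorm[OF jm, of d x] j R
          by (intro add_mono) auto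
        finally show "gnorm d (\<lambda>k. x j k - x (j-1) k) \<le> 2*R" by simp
      qed
    qed
    also have "\<dots> = W2 * (2*R)" unfolding W2_def by (simp add: sum_distrib_right)
    finally show ?thesis .
  qed
  have "m1 * (W1 * R) + m2 * (W2 * (2*R)) \<le> (m1 + m2) * (W1 + W2) * (2*R)"
  proof -
    have "m1 * (W1 * R) \<le> m1 * ((W1 + W2) * (2*R))" using m W1n W2n R0
      by (intro mult_left_mono mult_mono) auto
    moreover have "m2 * (W2 * (2*R)) \<le> m2 * ((W1 + W2) * (2*R))" using m W1n W2n R0
      by (intro mult_left_mono mult_mono) auto
    ultimately show ?thesis by (simp add: algebra_simps)
  qed
  moreover have "m1 * ((\<Sum>j<p. gnorm d (bt j) powr (-\<gamma>) * gnorm d (b0 j)) - (\<Sum>j<p. gnorm d (bt j) powr (-\<gamma>) * gnorm d (\<lambda>k. b0 j k + x j k)))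
      \<le> m1 * (W1 * R)" by (rule mult_left_mono[OF T1 m(1)])
  moreover have "m2 * ((\<Sum>j\<in>{1..<p}. gnorm d (\<lambda>k. bt j k - bt (j-1) k) powr (-\<gamma>) * gnorm d (\<lambda>k. b0 j k - b0 (j-1) k))
      - (\<Sum>j\<in>{1..<p}. gnorm d (\<lambda>k. bt j k - bt (j-1) k) powr (-\<gamma>) * gnorm d (\<lambda>k. (b0 j k + x j k) - (b0 (j-1) k + x (j-1) k))))
      \<le> m2 * (W2 * (2*R))" by (rule mult_left_mono[OF T2 m(2)])
  ultimately show ?thesis unfolding Qn_def Wc_def W1_def[symmetric] W2_def[symmetric]
    by (simp add: right_diff_distrib)
qed

context qr2 begin

lemma Gn_Dv:
  assumes n: "n > 0"
  shows "Gn \<tau> p d X (\<lambda>i. lin p d (X i) b0 + eps i \<omega>) n (\<lambda>j k. b0 j k + v j k / sqrt n)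
       - Gn \<tau> p d X (\<lambda>i. lin p d (X i) b0 + eps i \<omega>) n b0 = Dv n \<omega> v"
proof -
  have "lin p d (X i) (\<lambda>j k. b0 j k + v j k / sqrt n) = lin p d (X i) b0 + tt n v i" for i
    unfolding tt_def using lin_add[of p d "X i" b0 "\<lambda>j k. v j k / sqrt n"] lin_div[of p d "X i" v "sqrt n"] by simp
  then show ?thesis unfolding Gn_def Dv_def by (simp add: sum_subtractf)
qed

lemma ball_arg:
  fixes Obj :: "(nat \<Rightarrow> nat \<Rightarrow> real) \<Rightarrow> real"
  assumes n: "n > 0" and C: "C > 0"
    and H: "\<And>v. pnorm p d v = C \<Longrightarrow> Dv n \<omega> v > B"
    and conv: "\<And>l a b. 0 \<le> l \<Longrightarrow> l \<le> 1 \<Longrightarrow> Obj (\<lambda>j k. (1-l) * a j k + l * b j k) \<le> (1-l) * Obj a + l * Obj b"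
    and mn: "Obj b \<le> Obj b0"
    and link: "\<And>v. pnorm p d v = C \<Longrightarrow> Obj (\<lambda>j k. b0 j k + v j k / sqrt n) - Obj b0 \<ge> Dv n \<omega> v - B"
  shows "sqrt n * pnorm p d (\<lambda>j k. b j k - b0 j k) \<le> C"
proof (rule ccontr)
  assume "\<not> ?thesis"
  then have big: "sqrt n * pnorm p d (\<lambda>j k. b j k - b0 j k) > C" by simp
  define \<rho> where "\<rho> = pnorm p d (\<lambda>j k. b j k - b0 j k)"
  have sn: "sqrt n > 0" using n by simp
  have "\<rho> \<noteq> 0"
  proof
    assume "\<rho> = 0" then show False using big C unfolding \<rho>_def by simp
  qed
  then have \<rho>0: "\<rho> > 0" using pnorm_nonneg[of p d "\<lambda>j k. b j k - b0 j k"] unfolding \<rho>_def by linarith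
  define l where "l = C / (sqrt n * \<rho>)"
  have l0: "0 < l" unfolding l_def using C sn \<rho>0 by simp
  have l1: "l < 1" unfolding l_def using big sn \<rho>0 \<rho>_def by simp
  define v where "v = (\<lambda>j k. (sqrt n * l) * (b j k - b0 j k))"
  have pv: "pnorm p d v = C"
    unfolding v_def pnorm_scale \<rho>_def[symmetric] using sn l0 \<rho>0 C by (simp add: l_def)
  have pt: "(\<lambda>j k. b0 j k + v j k / sqrt n) = (\<lambda>j k. (1-l) * b0 j k + l * b j k)"
  proof (intro ext)
    fix j k
    have eq: "(sqrt n * l) * (b j k - b0 j k) / sqrt n = l * (b j k - b0 j k)" using sn by simp
    show "b0 j k + v j k / sqrt n = (1-l) * b0 j k + l * b j k" unfolding v_def eq by (simp add: algebra_simps)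
  qed
  have "Obj (\<lambda>j k. (1-l) * b0 j k + l * b j k) \<le> (1-l) * Obj b0 + l * Obj b"
    by (rule conv) (use l0 l1 in auto)
  also have "\<dots> \<le> (1-l) * Obj b0 + l * Obj b0" using mn l0 by (intro add_left_mono mult_left_mono) auto
  finally have "Obj (\<lambda>j k. b0 j k + v j k / sqrt n) - Obj b0 \<le> 0" unfolding pt by (simp add: algebra_simps)
  moreover have "Dv n \<omega> v - B > 0" using H[OF pv] by simp
  ultimately show False using link[OF pv] by linarith
qed

end


theorem lemma1:
  fixes M :: "'a measure"
    and p d :: nat
    and \<tau> \<gamma> :: real
    and X :: "nat \<Rightarrow> nat \<Rightarrow> nat \<Rightarrow> real"
    and \<beta>0 :: "nat \<Rightarrow> nat \<Rightarrow> real"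
    and eps :: "nat \<Rightarrow> 'a \<Rightarrow> real"
    and f :: "real \<Rightarrow> real"
    and mu1 mu2 :: "nat \<Rightarrow> real"
    and bt bh :: "nat \<Rightarrow> 'a \<Rightarrow> nat \<Rightarrow> nat \<Rightarrow> real"
  assumes P: "prob_space M"
    and pd: "p \<ge> 1" "d \<ge> 1"
    and tau: "0 < \<tau>" "\<tau> < 1"
    and gam: "\<gamma> > 0"
    \<comment> \<open>(A1)\<close>
    and indep: "prob_space.indep_vars M (\<lambda>_. borel) eps UNIV"
    and ident: "\<forall>i. distr M borel (eps i) = distr M borel (eps 0)"
    and dens: "distributed M lborel (eps 0) (\<lambda>x. ennreal (f x))"
    and f_nonneg: "\<forall>x. f x \<ge> 0"
    and f_loc: "\<exists>\<delta>>0. \<exists>f' B. \<forall>x. \<bar>x\<bar> < \<delta> \<longrightarrow>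
                   isCont f x \<and> f x > 0 \<and> (f has_real_derivative f' x) (at x) \<and> \<bar>f' x\<bar> \<le> B"
    and F0: "measure M {\<omega>\<in>space M. eps 0 \<omega> \<le> 0} = \<tau>"
    \<comment> \<open>(A2)\<close>
    and A2_eig: "\<exists>m0 M0. 0 < m0 \<and> m0 \<le> M0 \<and>
         (\<forall>\<^sub>F n in sequentially. m0 \<le> lambda_min (idx p d) (gram n X)
                                \<and> lambda_max (idx p d) (gram n X) \<le> M0)"
    and A2_lim: "\<exists>U. pos_def (idx p d) U \<and>
         (\<forall>a\<in>idx p d. \<forall>c\<in>idx p d. (\<lambda>n. gram n X a c) \<longlonglongrightarrow> U a c)"
    \<comment> \<open>(A3)\<close>
    and A3: "(\<lambda>n. Max ((\<lambda>i. pnorm p d (X i)) ` {..<n}) / sqrt (real n)) \<longlonglongrightarrow> 0"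
    \<comment> \<open>tuning parameters\<close>
    and mu_pos: "\<forall>n. mu1 n > 0 \<and> mu2 n > 0"
    and mu1_inf: "filterlim mu1 at_top sequentially"
    and mu2_inf: "filterlim mu2 at_top sequentially"
    and mu1_small: "(\<lambda>n. mu1 n / sqrt (real n)) \<longlonglongrightarrow> 0"
    and mu2_small: "(\<lambda>n. mu2 n / sqrt (real n)) \<longlonglongrightarrow> 0"
    and mu1_big: "filterlim (\<lambda>n. real n powr ((\<gamma> - 1) / 2) * mu1 n) at_top sequentially"
    and mu2_big: "filterlim (\<lambda>n. real n powr ((\<gamma> - 1) / 2) * mu2 n) at_top sequentially"
    \<comment> \<open>estimators: bt is the quantile estimator, bh the adaptive fused group LASSO one\<close>
    and bt_min: "\<forall>n. \<forall>\<omega>\<in>space M. \<forall>b.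
         Gn \<tau> p d X (\<lambda>i. lin p d (X i) \<beta>0 + eps i \<omega>) n (bt n \<omega>)
           \<le> Gn \<tau> p d X (\<lambda>i. lin p d (X i) \<beta>0 + eps i \<omega>) n b"
    and bh_min: "\<forall>n. \<forall>\<omega>\<in>space M. \<forall>b.
         Qn \<tau> \<gamma> p d X (\<lambda>i. lin p d (X i) \<beta>0 + eps i \<omega>) n (mu1 n) (mu2 n) (bt n \<omega>) (bh n \<omega>)
           \<le> Qn \<tau> \<gamma> p d X (\<lambda>i. lin p d (X i) \<beta>0 + eps i \<omega>) n (mu1 n) (mu2 n) (bt n \<omega>) b"
  shows "bounded_in_prob M
           (\<lambda>n \<omega>. sqrt (real n) * pnorm p d (\<lambda>j k. bh n \<omega> j k - \<beta>0 j k))"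
proof -
  interpret prob_space M by (rule P)
  obtain \<delta> where fl: "\<delta> > 0" "\<forall>x. \<bar>x\<bar> < \<delta> \<longrightarrow> isCont f x \<and> f x > 0"
    using f_loc by blast
  have fc: "isCont f 0" and fp: "f 0 > 0" using fl by auto
  obtain U where U: "pos_def (idx p d) U" "\<forall>a\<in>idx p d. \<forall>c\<in>idx p d. (\<lambda>n. gram n X a c) \<longlonglongrightarrow> U a c"
    using A2_lim by blast
  interpret Q: qr2 M eps f \<tau> p d X U
    unfolding qr2_def qr2_axioms_def qr_def qr_axioms_def
    using P indep ident dens fc fp F0 tau pd U A3 by auto
  define W where "W = Wc \<gamma> p d \<beta>0"
  have W0: "W \<ge> 0" unfolding W_def by (rule Wc_nonneg)
  define S where "S = insert 1 ((\<lambda>j. gnorm d (\<beta>0 j) / 4) ` {j. j < p \<and> gnorm d (\<beta>0 j) \<noteq> 0}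
      \<union> (\<lambda>j. gnorm d (\<lambda>k. \<beta>0 j k - \<beta>0 (j-1) k) / 4) ` {j. j < p \<and> 1 \<le> j \<and> gnorm d (\<lambda>k. \<beta>0 j k - \<beta>0 (j-1) k) \<noteq> 0})"
  define \<rho> where "\<rho> = Min S"
  have finS: "finite S" unfolding S_def by auto
  have Sne: "S \<noteq> {}" unfolding S_def by auto
  have gp: "\<And>v. gnorm d v \<noteq> 0 \<Longrightarrow> gnorm d v > 0"
  proof -
    fix v :: "nat \<Rightarrow> real" assume "gnorm d v \<noteq> 0"
    then show "gnorm d v > 0" using gnorm_nonneg[of d v] by linarith
  qed
  have Spos: "\<forall>s\<in>S. s > 0"
    unfolding S_def using gp by auto
  have \<rho>0: "\<rho> > 0" unfolding \<rho>_def using finS Sne Spos by (simp add: Min_gr_iff)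
  have \<rho>1: "\<And>j. j < p \<Longrightarrow> gnorm d (\<beta>0 j) \<noteq> 0 \<Longrightarrow> \<rho> \<le> gnorm d (\<beta>0 j) / 4"
    unfolding \<rho>_def using finS by (intro Min_le) (auto simp: S_def)
  have \<rho>2: "\<And>j. j < p \<Longrightarrow> 1 \<le> j \<Longrightarrow> gnorm d (\<lambda>k. \<beta>0 j k - \<beta>0 (j-1) k) \<noteq> 0 \<Longrightarrow> \<rho> \<le> gnorm d (\<lambda>k. \<beta>0 j k - \<beta>0 (j-1) k) / 4"
    unfolding \<rho>_def using finS by (intro Min_le) (auto simp: S_def)
  show ?thesis
    unfolding bounded_in_prob_def
  proof (intro allI impI)
    fix e :: real assume e: "e > 0"
    obtain C N1 where C1: "C \<ge> 1" and core: "\<And>n. n \<ge> N1 \<Longrightarrow> \<exists>A\<in>sets M. prob A < e \<and>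
           (\<forall>\<omega>\<in>space M - A. \<forall>v. pnorm p d v = C \<longrightarrow> Q.Dv n \<omega> v > Q.kap * C^2 / 4)"
      using Q.core[OF e] by blast
    have C0: "C > 0" using C1 by simp
    have kap: "Q.kap > 0" by (rule Q.kap_pos)
    have ev1: "eventually (\<lambda>n. (mu1 n / sqrt n + mu2 n / sqrt n) * (2*W) < Q.kap/4) sequentially"
    proof -
      have "((\<lambda>n. (mu1 n / sqrt n + mu2 n / sqrt n) * (2*W)) \<longlongrightarrow> (0 + 0) * (2*W)) sequentially"
        by (intro tendsto_mult tendsto_add mu1_small mu2_small tendsto_const)
      then show ?thesis by (rule order_tendstoD) (use kap in simp)
    qed
    have ev2: "eventually (\<lambda>n. real n \<ge> (C/\<rho>)^2 + 1) sequentially"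
      using eventually_ge_at_top[of "nat \<lceil>(C/\<rho>)^2 + 1\<rceil>"] by eventually_elim linarith
    obtain N2 where N2: "\<And>n. n \<ge> N2 \<Longrightarrow> (mu1 n / sqrt n + mu2 n / sqrt n) * (2*W) < Q.kap/4 \<and> real n \<ge> (C/\<rho>)^2 + 1"
      using eventually_conj[OF ev1 ev2] unfolding eventually_sequentially by blast
    show "\<exists>C N. \<forall>n\<ge>N. \<exists>A\<in>sets M. {\<omega> \<in> space M. C < \<bar>sqrt (real n) * pnorm p d (\<lambda>j k. bh n \<omega> j k - \<beta>0 j k)\<bar>} \<subseteq> A \<and> prob A < e"
    proof (intro exI[of _ C] exI[of _ "max N1 N2"] allI impI)
      fix n assume nN: "max N1 N2 \<le> n"
      obtain A where A: "A \<in> sets M" "prob A < e"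
        and good: "\<And>\<omega> v. \<omega> \<in> space M - A \<Longrightarrow> pnorm p d v = C \<Longrightarrow> Q.Dv n \<omega> v > Q.kap * C^2 / 4"
        using core[of n] nN by auto
      have N2n: "(mu1 n / sqrt n + mu2 n / sqrt n) * (2*W) < Q.kap/4" "real n \<ge> (C/\<rho>)^2 + 1"
        using N2[of n] nN by auto
      have "(0::real) < (C/\<rho>)^2 + 1" by (simp add: add_nonneg_pos)
      then have n0: "n > 0" using N2n(2) by (cases n) auto
      have sn: "sqrt n > 0" using n0 by simp
      have Crho: "C / sqrt n \<le> \<rho>"
      proof -
        have "sqrt ((C/\<rho>)^2) \<le> sqrt n" using N2n(2) by (intro real_sqrt_le_mono) simp
        then have "C/\<rho> \<le> sqrt n" using C0 \<rho>0 by simp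
        then show ?thesis using sn \<rho>0 by (simp add: divide_le_eq mult.commute pos_divide_le_eq)
      qed
      have B0: "Q.kap * C^2 / 4 \<ge> 0" using kap by simp
      have sub: "\<omega> \<in> A" if \<omega>: "\<omega> \<in> space M" and big: "C < \<bar>sqrt (real n) * pnorm p d (\<lambda>j k. bh n \<omega> j k - \<beta>0 j k)\<bar>" for \<omega>
      proof (rule ccontr)
        assume nA: "\<omega> \<notin> A"
        define Y where "Y = (\<lambda>i. lin p d (X i) \<beta>0 + eps i \<omega>)"
        have H: "\<And>v. pnorm p d v = C \<Longrightarrow> Q.Dv n \<omega> v > Q.kap * C^2 / 4" using good \<omega> nA by auto
        have bt_close: "sqrt n * pnorm p d (\<lambda>j k. bt n \<omega> j k - \<beta>0 j k) \<le> C"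
        proof (rule Q.ball_arg[OF n0 C0 H])
          show "\<And>l a b. 0 \<le> l \<Longrightarrow> l \<le> 1 \<Longrightarrow> Gn \<tau> p d X Y n (\<lambda>j k. (1-l) * a j k + l * b j k) \<le> (1-l) * Gn \<tau> p d X Y n a + l * Gn \<tau> p d X Y n b"
            by (rule Gn_convex) (use tau in auto)
          show "Gn \<tau> p d X Y n (bt n \<omega>) \<le> Gn \<tau> p d X Y n \<beta>0" using bt_min \<omega> unfolding Y_def by blast
          fix v assume "pnorm p d v = C"
          show "Gn \<tau> p d X Y n (\<lambda>j k. \<beta>0 j k + v j k / sqrt n) - Gn \<tau> p d X Y n \<beta>0 \<ge> Q.Dv n \<omega> v - Q.kap * C^2 / 4"
            unfolding Y_def Q.Gn_Dv[OF n0] using B0 by simp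
        qed
        have btr: "pnorm p d (\<lambda>j k. bt n \<omega> j k - \<beta>0 j k) \<le> \<rho>"
        proof -
          have "pnorm p d (\<lambda>j k. bt n \<omega> j k - \<beta>0 j k) \<le> C / sqrt n"
            using bt_close sn by (simp add: pos_le_divide_eq mult.commute)
          then show ?thesis using Crho by simp
        qed
        have bh_close: "sqrt n * pnorm p d (\<lambda>j k. bh n \<omega> j k - \<beta>0 j k) \<le> C"
        proof (rule Q.ball_arg[OF n0 C0 H])
          show "\<And>l a b. 0 \<le> l \<Longrightarrow> l \<le> 1 \<Longrightarrow> Qn \<tau> \<gamma> p d X Y n (mu1 n) (mu2 n) (bt n \<omega>) (\<lambda>j k. (1-l) * a j k + l * b j k)
              \<le> (1-l) * Qn \<tau> \<gamma> p d X Y n (mu1 n) (mu2 n) (bt n \<omega>) a + l * Qn \<tau> \<gamma> p d X Y n (mu1 n) (mu2 n) (bt n \<omega>) b"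
            by (rule Qn_convex) (use tau mu_pos in \<open>auto simp: less_imp_le\<close>)
          show "Qn \<tau> \<gamma> p d X Y n (mu1 n) (mu2 n) (bt n \<omega>) (bh n \<omega>) \<le> Qn \<tau> \<gamma> p d X Y n (mu1 n) (mu2 n) (bt n \<omega>) \<beta>0"
            using bh_min \<omega> unfolding Y_def by blast
          fix v assume pv: "pnorm p d v = C"
          have px: "pnorm p d (\<lambda>j k. v j k / sqrt n) \<le> C / sqrt n"
          proof -
            have "pnorm p d (\<lambda>j k. (1 / sqrt n) * v j k) = \<bar>1 / sqrt n\<bar> * pnorm p d v" by (rule pnorm_scale)
            then show ?thesis using pv sn by simp
          qed
          have pd': "Qn \<tau> \<gamma> p d X Y n (mu1 n) (mu2 n) (bt n \<omega>) \<beta>0 - Qn \<tau> \<gamma> p d X Y n (mu1 n) (mu2 n) (bt n \<omega>) (\<lambda>j k. \<beta>0 j k + v j k / sqrt n)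
              \<le> Gn \<tau> p d X Y n \<beta>0 - Gn \<tau> p d X Y n (\<lambda>j k. \<beta>0 j k + v j k / sqrt n) + (mu1 n + mu2 n) * Wc \<gamma> p d \<beta>0 * (2 * (C / sqrt n))"
            by (rule pen_diff[OF gam _ _ px btr \<rho>1 \<rho>2]) (use mu_pos in \<open>auto simp: less_imp_le\<close>)
          have gd: "Gn \<tau> p d X Y n (\<lambda>j k. \<beta>0 j k + v j k / sqrt n) - Gn \<tau> p d X Y n \<beta>0 = Q.Dv n \<omega> v"
            unfolding Y_def by (rule Q.Gn_Dv[OF n0])
          have "(mu1 n + mu2 n) * Wc \<gamma> p d \<beta>0 * (2 * (C / sqrt n)) = C * ((mu1 n / sqrt n + mu2 n / sqrt n) * (2*W))"
            unfolding W_def by (simp add: field_simps add_divide_distrib)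
          also have "\<dots> \<le> C * (Q.kap/4)" using N2n(1) C0 by (intro mult_left_mono) auto
          also have "\<dots> \<le> C * C * (Q.kap/4)" using C1 kap by (intro mult_right_mono) auto
          also have "\<dots> = Q.kap * C^2 / 4" by (simp add: power2_eq_square)
          finally have pb: "(mu1 n + mu2 n) * Wc \<gamma> p d \<beta>0 * (2 * (C / sqrt n)) \<le> Q.kap * C^2 / 4" .
          show "Qn \<tau> \<gamma> p d X Y n (mu1 n) (mu2 n) (bt n \<omega>) (\<lambda>j k. \<beta>0 j k + v j k / sqrt n) - Qn \<tau> \<gamma> p d X Y n (mu1 n) (mu2 n) (bt n \<omega>) \<beta>0
              \<ge> Q.Dv n \<omega> v - Q.kap * C^2 / 4"
            using pd' gd pb by linarith
        qed
        then show False using big sn by (simp add: abs_mult)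
      qed
      show "\<exists>A\<in>sets M. {\<omega> \<in> space M. C < \<bar>sqrt (real n) * pnorm p d (\<lambda>j k. bh n \<omega> j k - \<beta>0 j k)\<bar>} \<subseteq> A \<and> prob A < e"
        using A sub by blast
    qed
  qed
qed


end
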